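(* Let $0<|p|<1$, let $m_1,\dots,m_r\in\mathbb Z_{\ge0}$ and $n=m_1+\dots+m_r$, and let $a,b,c_1,\dots,c_r,q\in\mathbb C^\ast$. Then, whenever no denominator vanishes, $$\sum_{j=0}^n\frac{\theta(aq^{2j};p)}{\theta(a;p)}\frac{(a,b,a/b,q^{-n};q,p)_j}{(q,aq/b,bq,aq^{n+1};q,p)_j}\,q^j\prod_{l=1}^r\frac{(c_lq^{m_l},aq/c_l;q,p)_j}{(c_l,aq^{1-m_l}/c_l;q,p)_j}=\frac{(q,aq;q,p)_n}{(aq/b,bq;q,p)_n}\prod_{l=1}^r\frac{(c_l/b,bc_l/a;q,p)_{m_l}}{(c_l,c_l/a;q,p)_{m_l}}.$$
   Context: $\theta(x;p)=\prod_{k=0}^\infty(1-xp^k)(1-p^{k+1}/x)$ for $x\neq0$. Elliptic shifted factorial: $(a;q,p)_k=\prod_{j=0}^{k-1}\theta(aq^j;p)$ for $k\in\mathbb Z_{\ge0}$, and $(a_1,\dots,a_m;q,p)_k=(a_1;q,p)_k\cdots(a_m;q,p)_k$. *)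

theory Defs
  imports "HOL-Analysis.Analysis"
begin

definition theta :: "complex \<Rightarrow> complex \<Rightarrow> complex" where
  "theta x p = (\<Prod>k. (1 - x * p ^ k) * (1 - p ^ (k + 1) / x))"

definition ell_fac :: "complex \<Rightarrow> complex \<Rightarrow> complex \<Rightarrow> nat \<Rightarrow> complex" where
  "ell_fac a q p k = (\<Prod>j<k. theta (a * q ^ j) p)"

end

theory Submission
  imports Defs "HOL-Complex_Analysis.Complex_Analysis"
begin


definition Einf :: "complex \<Rightarrow> complex \<Rightarrow> complex" where
  "Einf p y = (\<Prod>k. 1 - y * p ^ k)"

locale ptheta =
  fixes p :: complex
  assumes p0: "0 < norm p" and p1: "norm p < 1"
begin

lemma p_nz[simp]: "p \<noteq> 0" using p0 by auto

lemma summable_geo: "summable (\<lambda>k. C * norm p ^ k)"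
  by (intro summable_mult summable_geometric) (use p0 p1 in auto)

lemma E_conv: "convergent_prod (\<lambda>k. 1 - y * p ^ k)"
proof -
  have "summable (\<lambda>k. norm ((1 - y * p ^ k) - 1))"
    using summable_geo[of "norm y"] by (simp add: norm_mult norm_power)
  then have "abs_convergent_prod (\<lambda>k. 1 - y * p ^ k)"
    by (rule summable_imp_abs_convergent_prod)
  then show ?thesis by (rule abs_convergent_prod_imp_convergent_prod)
qed

lemma E_conv2: "convergent_prod (\<lambda>k. 1 - p ^ (k+1) / x)"
proof -
  have "(\<lambda>k. 1 - p ^ (k+1) / x) = (\<lambda>k. 1 - (p/x) * p ^ k)"
    by (auto simp: field_simps)
  then show ?thesis using E_conv[of "p/x"] by simp
qed

lemma theta_E: "theta x p = Einf p x * Einf p (p / x)"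
proof -
  have "Einf p x * Einf p (p / x) = (\<Prod>k. (1 - x * p ^ k) * (1 - (p/x) * p ^ k))"
    unfolding Einf_def by (rule prodinf_mult) (rule E_conv)+
  also have "\<dots> = theta x p" unfolding theta_def
    by (rule prodinf_cong) (auto simp: field_simps)
  finally show ?thesis by simp
qed

lemma E_zero_iff: "Einf p y = 0 \<longleftrightarrow> (\<exists>k. y * p ^ k = 1)"
proof -
  have "(\<lambda>k. 1 - y * p ^ k) has_prod Einf p y"
    unfolding Einf_def using E_conv convergent_prod_has_prod by blast
  from has_prod_eq_0_iff[OF this] show ?thesis
    by (auto simp: image_iff eq_commute[of 0] eq_commute[of 1] right_minus_eq)
qed

lemma E_split: "Einf p y = (1 - y) * Einf p (p * y)"
proof (cases "y = 1")
  case True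
  then show ?thesis using E_zero_iff[of 1] by (metis mult_1 mult_zero_left power_0 right_minus_eq)
next
  case False
  have "(\<Prod>n. 1 - y * p ^ Suc n) = Einf p y / (1 - y * p ^ 0)"
    unfolding Einf_def by (rule prodinf_split_head) (use E_conv False in auto)
  moreover have "(\<Prod>n. 1 - y * p ^ Suc n) = Einf p (p * y)"
    unfolding Einf_def by (rule prodinf_cong) (auto simp: field_simps)
  ultimately show ?thesis using False by (auto simp: field_simps)
qed

lemma theta_zero_iff:
  assumes "x \<noteq> 0"
  shows "theta x p = 0 \<longleftrightarrow> (\<exists>j::int. x = p powi j)"
proof
  assume "theta x p = 0"
  then have "Einf p x = 0 \<or> Einf p (p/x) = 0" by (simp add: theta_E)
  then show "\<exists>j::int. x = p powi j"
  proof
    assume "Einf p x = 0"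
    then obtain k where "x * p ^ k = 1" using E_zero_iff by auto
    then have "x = p powi (- int k)"
      by (auto simp: power_int_minus field_simps)
    then show ?thesis by blast
  next
    assume "Einf p (p/x) = 0"
    then obtain k where "p / x * p ^ k = 1" using E_zero_iff by auto
    then have "x = p ^ (Suc k)" using assms
      by (auto simp: field_simps)
    then have "x = p powi (int (Suc k))" by (metis power_int_of_nat)
    then show ?thesis by blast
  qed
next
  assume "\<exists>j::int. x = p powi j"
  then obtain j :: int where j: "x = p powi j" by blast
  show "theta x p = 0"
  proof (cases "j \<le> 0")
    case True
    then have "x * p ^ nat (- j) = 1" using j
      by (auto simp: power_int_def field_simps)
    then show ?thesis by (auto simp: theta_E E_zero_iff)
  next
    case False
    then have "p / x * p ^ nat (j - 1) = 1" using j
      by (auto simp: power_int_def field_simps power_Suc[symmetric] Suc_nat_eq_nat_zadd1)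
    then show ?thesis by (auto simp: theta_E E_zero_iff)
  qed
qed

lemma theta_quasi_aux: "x \<noteq> 0 \<Longrightarrow> Einf p (p * x) * Einf p (1 / x) * x = - (Einf p x * Einf p (p / x))"
proof -
  assume x: "x \<noteq> 0"
  have 1: "Einf p (1/x) = (1 - 1/x) * Einf p (p/x)" using E_split[of "1/x"] by simp
  have 2: "Einf p x = (1 - x) * Einf p (p*x)" using E_split[of x] by simp
  show ?thesis unfolding 1 2 using x by (simp add: field_simps)
qed

lemma theta_quasi: "x \<noteq> 0 \<Longrightarrow> theta (p * x) p * x = - theta x p"
  using theta_quasi_aux[of x] by (simp add: theta_E)

lemma theta_inv: "x \<noteq> 0 \<Longrightarrow> theta (1 / x) p * x = - theta x p"
  using theta_quasi_aux[of x] by (simp add: theta_E mult.commute)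


lemma E_uconv:
  assumes "R > 0"
  shows "uniformly_convergent_on (cball 0 R) (\<lambda>N y. \<Prod>k<N. 1 - y * p ^ k)"
proof (rule uniformly_convergent_on_prod')
  show "uniformly_convergent_on (cball 0 R) (\<lambda>N y. \<Sum>k<N. norm (1 - y * p ^ k - 1))"
  proof (rule Weierstrass_m_test')
    fix k and y :: complex assume "y \<in> cball 0 R"
    then have "norm y \<le> R" by auto
    then show "norm (norm (1 - y * p ^ k - 1)) \<le> R * norm p ^ k"
      by (simp add: norm_mult norm_power mult_right_mono)
  qed (rule summable_geo)
qed (auto intro!: continuous_intros)

lemma E_ulim:
  assumes "R > 0"
  shows "uniform_limit (cball 0 R) (\<lambda>N y. \<Prod>k<N. 1 - y * p ^ k) (Einf p) sequentially"
proof -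
  obtain g where g: "uniform_limit (cball 0 R) (\<lambda>N y. \<Prod>k<N. 1 - y * p ^ k) g sequentially"
    using E_uconv[OF assms] by (auto simp: uniformly_convergent_on_def)
  have "g z = Einf p z" if z: "z \<in> cball 0 R" for z
  proof -
    have "(\<lambda>n. \<Prod>k<n. 1 - z * p ^ k) \<longlonglongrightarrow> g z"
      by (rule tendsto_uniform_limitI[OF g z])
    then have A: "(\<lambda>n. \<Prod>k<Suc n. 1 - z * p ^ k) \<longlonglongrightarrow> g z"
      by (rule LIMSEQ_Suc)
    have B: "(\<lambda>n. \<Prod>k<Suc n. 1 - z * p ^ k) \<longlonglongrightarrow> Einf p z"
      using convergent_prod_LIMSEQ[OF E_conv[of z]] unfolding lessThan_Suc_atMost Einf_def .
    show ?thesis using LIMSEQ_unique[OF A B] .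
  qed
  then show ?thesis
    using uniform_limit_cong'[of "cball 0 R" "(\<lambda>N y. \<Prod>k<N. 1 - y * p ^ k)" "(\<lambda>N y. \<Prod>k<N. 1 - y * p ^ k)" g "Einf p" sequentially] g
    by blast
qed

lemma E_holo: "Einf p holomorphic_on A"
proof (rule holomorphic_on_subset)
  show "Einf p holomorphic_on UNIV"
  proof (rule holomorphic_uniform_sequence[where f = "\<lambda>N y. \<Prod>k<N. 1 - y * p ^ k"])
    fix z :: complex
    have *: "uniform_limit (cball 0 (norm z + 1)) (\<lambda>N y. \<Prod>k<N. 1 - y * p ^ k) (Einf p) sequentially"
      by (rule E_ulim) (auto intro: add_nonneg_pos)
    hence "uniform_limit (cball z 1) (\<lambda>N y. \<Prod>k<N. 1 - y * p ^ k) (Einf p) sequentially"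
      by (rule uniform_limit_on_subset) (simp add: cball_subset_cball_iff)
    thus "\<exists>d>0. cball z d \<subseteq> UNIV \<and> uniform_limit (cball z d) (\<lambda>N y. \<Prod>k<N. 1 - y * p ^ k) (Einf p) sequentially"
      by (intro exI[of _ 1]) auto
  next
    fix n :: nat
    show "(\<lambda>y. \<Prod>k<n. 1 - y * p ^ k) holomorphic_on UNIV"
      by (intro holomorphic_on_prod ballI holomorphic_intros)
  qed simp
qed auto

lemma E_cont: "continuous_on A (Einf p)"
  using E_holo holomorphic_on_imp_continuous_on by blast

lemma theta_holo: "(\<lambda>x. theta x p) holomorphic_on (- {0})"
proof -
  have h1: "(\<lambda>x. p / x) holomorphic_on (- {0})"
    by (intro holomorphic_intros) auto
  have h2: "(\<lambda>x. Einf p (p / x)) holomorphic_on (- {0})"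
    using holomorphic_on_compose[OF h1 E_holo[of "(\<lambda>x. p / x) ` (- {0})"]] by (simp add: o_def)
  have "(\<lambda>x. Einf p x * Einf p (p / x)) holomorphic_on (- {0})"
    by (rule holomorphic_on_mult[OF E_holo h2])
  then show ?thesis
    by (rule holomorphic_transform) (auto simp: theta_E)
qed

lemma theta_cont_at: "x \<noteq> 0 \<Longrightarrow> isCont (\<lambda>x. theta x p) x"
proof -
  assume "x \<noteq> 0"
  have "continuous_on (- {0}) (\<lambda>x. theta x p)"
    using theta_holo holomorphic_on_imp_continuous_on by blast
  moreover have "open (- {0::complex})" by auto
  ultimately show ?thesis using \<open>x \<noteq> 0\<close> continuous_on_eq_continuous_at by blast
qed

lemma tendsto_theta[tendsto_intros]:
  "(f \<longlongrightarrow> x) F \<Longrightarrow> x \<noteq> 0 \<Longrightarrow> ((\<lambda>t. theta (f t) p) \<longlongrightarrow> theta x p) F"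
  using isCont_tendsto_compose[OF theta_cont_at] by blast

lemma E_p_nz: "Einf p p \<noteq> 0"
proof
  assume "Einf p p = 0"
  then obtain k where "p * p ^ k = 1" using E_zero_iff by auto
  then have "norm p ^ Suc k = 1" by (metis norm_one norm_power power_Suc)
  moreover have "norm p ^ Suc k < 1" using power_Suc_less_one[of "norm p" k] p0 p1 by simp
  ultimately show False by simp
qed

end

context ptheta begin

lemma theta_powi: "theta (p powi j) p = 0"
  by (subst theta_zero_iff) auto

lemma theta_one: "theta 1 p = 0"
  using theta_powi[of 0] by simp

definition th' :: "complex \<Rightarrow> complex" where "th' x = deriv (\<lambda>x. theta x p) x"

lemma theta_has_deriv: "x \<noteq> 0 \<Longrightarrow> ((\<lambda>x. theta x p) has_field_derivative th' x) (at x within T)"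
  unfolding th'_def using theta_holo by (intro holomorphic_derivI[of _ "-{0}"]) auto

lemma R_holo: "(\<lambda>y. Einf p (p * y) * Einf p (p / y)) holomorphic_on (- {0})"
proof -
  have h1: "(\<lambda>x. p / x) holomorphic_on (- {0})"
    by (intro holomorphic_intros) auto
  have h2: "(\<lambda>x. Einf p (p / x)) holomorphic_on (- {0})"
    using holomorphic_on_compose[OF h1 E_holo[of "(\<lambda>x. p / x) ` (- {0})"]] by (simp add: o_def)
  have h3: "(\<lambda>x. p * x) holomorphic_on (- {0})"
    by (intro holomorphic_intros)
  have h4: "(\<lambda>x. Einf p (p * x)) holomorphic_on (- {0})"
    using holomorphic_on_compose[OF h3 E_holo[of "(\<lambda>x. p * x) ` (- {0})"]] by (simp add: o_def)
  show ?thesis by (rule holomorphic_on_mult[OF h4 h2])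
qed

lemma th'_one: "th' 1 \<noteq> 0"
proof -
  define R where "R = (\<lambda>y. Einf p (p * y) * Einf p (p / y))"
  have "R holomorphic_on (- {0})" unfolding R_def by (rule R_holo)
  then have dR: "(R has_field_derivative deriv R 1) (at 1)"
    by (intro holomorphic_derivI[of _ "-{0}"]) auto
  have "((\<lambda>y. (1 - y) * R y) has_field_derivative (0 - 1) * R 1 + deriv R 1 * (1 - 1)) (at 1)"
    by (rule DERIV_mult[OF DERIV_diff[OF DERIV_const DERIV_ident] dR])
  then have d1: "((\<lambda>y. (1 - y) * R y) has_field_derivative - R 1) (at 1)" by simp
  have d2: "((\<lambda>x. theta x p) has_field_derivative - R 1) (at 1)"
  proof (rule has_field_derivative_transform_within_open[OF d1, of "- {0}"])
    fix x :: complex assume "x \<in> - {0}"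
    then show "(1 - x) * R x = theta x p"
      unfolding R_def theta_E using E_split[of x] by simp
  qed auto
  have "th' 1 = - R 1"
    using DERIV_unique[OF theta_has_deriv[of 1 UNIV] d2] by simp
  moreover have "R 1 \<noteq> 0" unfolding R_def using E_p_nz by simp
  ultimately show ?thesis by simp
qed

lemma th'_shift:
  assumes x: "x \<noteq> 0" and z: "theta x p = 0"
  shows "th' (p * x) * p * x = - th' x"
proof -
  have z2: "theta (p * x) p = 0" using theta_quasi[OF x] z x by simp
  have c: "((\<lambda>y. theta (p * y) p) has_field_derivative th' (p * x) * p) (at x)"
    by (rule DERIV_chain2[OF theta_has_deriv]) (use x in \<open>auto intro!: derivative_eq_intros\<close>)
  have "((\<lambda>y. theta (p * y) p * y) has_field_derivative th' (p * x) * p * x + 1 * theta (p * x) p) (at x)"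
    by (rule DERIV_mult[OF c DERIV_ident])
  then have d1: "((\<lambda>y. theta (p * y) p * y) has_field_derivative th' (p * x) * p * x) (at x)"
    using z2 by simp
  have d2: "((\<lambda>y. - theta y p) has_field_derivative th' (p * x) * p * x) (at x)"
  proof (rule has_field_derivative_transform_within_open[OF d1, of "- {0}"])
    fix y :: complex assume "y \<in> - {0}"
    then show "theta (p * y) p * y = - theta y p" using theta_quasi by simp
  qed (use x in auto)
  have d3: "((\<lambda>y. - theta y p) has_field_derivative - th' x) (at x)"
    using DERIV_minus[OF theta_has_deriv[OF x]] by simp
  show ?thesis using DERIV_unique[OF d2 d3] .
qed

lemma th'_nz_powi: "th' (p powi j) \<noteq> 0"
proof -
  have "th' (p ^ n) \<noteq> 0 \<and> th' (p powi (- int n)) \<noteq> 0" for n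
  proof (induction n)
    case 0 then show ?case using th'_one by simp
  next
    case (Suc n)
    have A: "th' (p ^ Suc n) \<noteq> 0"
    proof -
      have "th' (p * p ^ n) * p * p ^ n = - th' (p ^ n)"
        by (rule th'_shift) (use theta_powi[of "int n"] in auto)
      then show ?thesis using Suc.IH by auto
    qed
    have B: "th' (p powi (- int (Suc n))) \<noteq> 0"
    proof -
      define y where "y = p powi (- int (Suc n))"
      have py: "p * y = p powi (- int n)" unfolding y_def
        by (simp only: power_int_minus power_int_of_nat) (simp add: field_simps)
      have y0: "y \<noteq> 0" unfolding y_def by simp
      have "th' (p * y) * p * y = - th' y"
        by (rule th'_shift[OF y0]) (simp add: y_def theta_powi)
      then show ?thesis using Suc.IH py y0 unfolding y_def[symmetric] by auto
    qed
    show ?case using A B by blast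
  qed
  then show ?thesis
    by (cases j rule: int_cases2) (auto simp: power_int_of_nat)
qed

lemma th'_nz: "x \<noteq> 0 \<Longrightarrow> theta x p = 0 \<Longrightarrow> th' x \<noteq> 0"
  using theta_zero_iff th'_nz_powi by blast

end


lemma lhopital_lim:
  fixes f g :: "complex \<Rightarrow> complex"
  assumes df: "(f has_field_derivative f') (at z0)" and dg: "(g has_field_derivative g') (at z0)"
    and f0: "f z0 = 0" and g0: "g z0 = 0" and g'0: "g' \<noteq> 0"
  shows "((\<lambda>z. f z / g z) \<longlongrightarrow> f' / g') (at z0)" and "eventually (\<lambda>z. g z \<noteq> 0) (at z0)"
proof -
  have A: "((\<lambda>y. f y / (y - z0)) \<longlongrightarrow> f') (at z0)"
    using df unfolding has_field_derivative_iff f0 by simp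
  have B: "((\<lambda>y. g y / (y - z0)) \<longlongrightarrow> g') (at z0)"
    using dg unfolding has_field_derivative_iff g0 by simp
  have C: "((\<lambda>y. (f y / (y - z0)) / (g y / (y - z0))) \<longlongrightarrow> f' / g') (at z0)"
    by (rule tendsto_divide[OF A B g'0])
  have ev: "eventually (\<lambda>y. y \<noteq> z0) (at z0)"
    by (simp add: eventually_at_filter)
  show "((\<lambda>z. f z / g z) \<longlongrightarrow> f' / g') (at z0)"
  proof (rule Lim_transform_eventually[OF C])
    show "\<forall>\<^sub>F x in at z0. f x / (x - z0) / (g x / (x - z0)) = f x / g x"
      using ev
    proof eventually_elim
      case (elim y)
      then have "y - z0 \<noteq> 0" by simp
      then show ?case by (cases "g y = 0") (simp_all add: field_simps)
    qed
  qed
  have "eventually (\<lambda>y. g y / (y - z0) \<noteq> 0) (at z0)"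
    by (rule tendsto_imp_eventually_ne[OF B g'0])
  then show "eventually (\<lambda>z. g z \<noteq> 0) (at z0)"
    by eventually_elim auto
qed

context ptheta begin

lemma powi_shift:
  assumes P: "\<And>z. z \<noteq> 0 \<Longrightarrow> P (p * z) = P z" and z: "z \<noteq> 0"
  shows "P (p powi j * z) = P z"
proof -
  have n: "P (p ^ n * z) = P z" if "z \<noteq> 0" for n z
    using that proof (induction n)
    case (Suc n)
    have "P (p ^ Suc n * z) = P (p * (p ^ n * z))" by (simp add: mult.assoc)
    also have "\<dots> = P (p ^ n * z)" using P Suc.prems by simp
    finally show ?case using Suc by simp
  qed simp
  show ?thesis
  proof (cases "j \<ge> 0")
    case True
    then obtain n where "j = int n" using zero_le_imp_eq_int by blast
    then show ?thesis using n[OF z] by (simp add: power_int_of_nat)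
  next
    case False
    define n where "n = nat (- j)"
    have jn: "j = - int n" unfolding n_def using False by simp
    have pj: "p powi j = inverse (p ^ n)" unfolding jn by (simp add: power_int_minus power_int_of_nat)
    define w where "w = p powi j * z"
    have w0: "w \<noteq> 0" unfolding w_def using z by simp
    have e: "p ^ n * w = z" unfolding w_def pj by simp
    have "P z = P w" using n[OF w0, of n] unfolding e .
    then show ?thesis by (simp add: w_def)
  qed
qed

lemma annulus_reduce:
  assumes z: "z \<noteq> 0"
  shows "\<exists>j::int. norm p \<le> norm (p powi j * z) \<and> norm (p powi j * z) \<le> 1"
proof -
  define r where "r = norm p"
  define x where "x = norm z"
  have r0: "0 < r" and r1: "r < 1" using p0 p1 by (auto simp: r_def)
  have x0: "0 < x" using z by (simp add: x_def)
  define L where "L = ln r"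
  have L0: "L < 0" unfolding L_def using r0 r1 by simp
  define k where "k = floor (ln x / L)"
  have k1: "of_int k \<le> ln x / L" and k2: "ln x / L < of_int k + 1"
    unfolding k_def by linarith+
  have e1: "ln x \<le> of_int k * L"
    using k1 L0 by (simp add: pos_le_divide_eq neg_le_divide_eq mult.commute)
  have e2: "(of_int k + 1) * L < ln x"
    using k2 L0 by (simp add: neg_divide_less_eq mult.commute)
  have eq: "norm (p powi (- k) * z) = exp (ln x - of_int k * L)"
  proof -
    have "norm (p powi (- k) * z) = r powi (- k) * x"
      by (simp add: norm_mult norm_power_int r_def x_def)
    also have "r powi (- k) = r powr real_of_int (- k)"
      using r0 by (subst powr_real_of_int') auto
    also have "\<dots> = exp (- of_int k * L)"
      using r0 by (simp add: powr_def L_def)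
    also have "x = exp (ln x)" using x0 by simp
    finally show ?thesis by (simp add: exp_add[symmetric] algebra_simps)
  qed
  have "exp (ln x - of_int k * L) \<le> 1" using e1 by simp
  moreover have "r \<le> exp (ln x - of_int k * L)"
  proof -
    have "L < ln x - of_int k * L" using e2 by (simp add: algebra_simps)
    then have "exp L < exp (ln x - of_int k * L)" by simp
    then show ?thesis using r0 by (simp add: L_def)
  qed
  ultimately show ?thesis using eq by (intro exI[of _ "- k"]) (simp add: r_def)
qed

end

locale liou = ptheta +
  fixes a e1 :: complex and N :: "complex \<Rightarrow> complex"
  assumes a0: "a \<noteq> 0" and e10: "e1 \<noteq> 0" and gen: "theta (e1^2 / a) p \<noteq> 0"
    and Nholo: "N holomorphic_on (- {0})"
    and Nq: "\<And>z. z \<noteq> 0 \<Longrightarrow> N (p * z) * (a * z^2) = N z"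
    and N1: "N (1 / e1) = 0" and N2: "N (e1 / a) = 0"
begin

definition D :: "complex \<Rightarrow> complex" where "D z = theta (e1 * z) p * theta (a * z / e1) p"
definition D' :: "complex \<Rightarrow> complex" where
  "D' z = e1 * th' (e1 * z) * theta (a * z / e1) p + (a / e1) * th' (a * z / e1) * theta (e1 * z) p"

lemma D_deriv: "z \<noteq> 0 \<Longrightarrow> (D has_field_derivative D' z) (at z)"
proof -
  assume z: "z \<noteq> 0"
  have c1: "((\<lambda>y. theta (e1 * y) p) has_field_derivative th' (e1 * z) * e1) (at z)"
    by (rule DERIV_chain2[OF theta_has_deriv]) (use z e10 in \<open>auto intro!: derivative_eq_intros\<close>)
  have c2: "((\<lambda>y. theta (a * y / e1) p) has_field_derivative th' (a * z / e1) * (a / e1)) (at z)"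
    by (rule DERIV_chain2[OF theta_has_deriv]) (use z e10 a0 in \<open>auto intro!: derivative_eq_intros\<close>)
  show ?thesis
    using DERIV_mult[OF c1 c2] unfolding D_def[abs_def] D'_def by (simp add: algebra_simps)
qed

lemma N_deriv: "z \<noteq> 0 \<Longrightarrow> (N has_field_derivative deriv N z) (at z)"
  using Nholo by (intro holomorphic_derivI[of _ "-{0}"]) auto

lemma D_q: "z \<noteq> 0 \<Longrightarrow> D (p * z) * (a * z^2) = D z"
proof -
  assume z: "z \<noteq> 0"
  have 1: "theta (p * (e1 * z)) p * (e1 * z) = - theta (e1 * z) p"
    by (rule theta_quasi) (use z e10 in auto)
  have 2: "theta (p * (a * z / e1)) p * (a * z / e1) = - theta (a * z / e1) p"
    by (rule theta_quasi) (use z e10 a0 in auto)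
  have "D (p * z) * (a * z^2) = (theta (p * (e1 * z)) p * (e1 * z)) * (theta (p * (a * z / e1)) p * (a * z / e1))"
    unfolding D_def using e10 by (simp add: field_simps power2_eq_square)
  also have "\<dots> = D z" unfolding 1 2 D_def by simp
  finally show ?thesis .
qed

lemma N_zero_shift: "z \<noteq> 0 \<Longrightarrow> (N (p * z) = 0) = (N z = 0)"
  using Nq[of z] a0 by (metis mult_eq_0_iff power_eq_0_iff)

lemma D_zero_N: assumes z: "z \<noteq> 0" and Dz: "D z = 0" shows "N z = 0"
proof -
  have "theta (e1 * z) p = 0 \<or> theta (a * z / e1) p = 0" using Dz by (simp add: D_def)
  then show ?thesis
  proof
    assume "theta (e1 * z) p = 0"
    then obtain j where j: "e1 * z = p powi j" using theta_zero_iff[of "e1 * z"] z e10 by auto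
    have "z = p powi j * (1 / e1)" using j e10 by (simp add: field_simps)
    then show ?thesis using powi_shift[of "\<lambda>w. N w = 0", OF N_zero_shift, of "1/e1" j] N1 e10 by simp
  next
    assume "theta (a * z / e1) p = 0"
    then obtain j where j: "a * z / e1 = p powi j" using theta_zero_iff[of "a * z / e1"] z e10 a0 by auto
    have "z = p powi j * (e1 / a)" using j e10 a0 by (simp add: field_simps)
    then show ?thesis using powi_shift[of "\<lambda>w. N w = 0", OF N_zero_shift, of "e1 / a" j] N2 e10 a0 by simp
  qed
qed

lemma D'_nz: assumes z: "z \<noteq> 0" and Dz: "D z = 0" shows "D' z \<noteq> 0"
proof -
  have not_both: "\<not> (theta (e1 * z) p = 0 \<and> theta (a * z / e1) p = 0)"
  proof
    assume "theta (e1 * z) p = 0 \<and> theta (a * z / e1) p = 0"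
    then obtain i j where i: "e1 * z = p powi i" and j: "a * z / e1 = p powi j"
      using theta_zero_iff[of "e1 * z"] theta_zero_iff[of "a * z / e1"] z e10 a0 by auto
    have "e1^2 / a = (e1 * z) / (a * z / e1)" using z e10 a0 by (simp add: field_simps power2_eq_square)
    also have "\<dots> = p powi (i - j)" unfolding i j by (simp add: power_int_diff)
    finally show False using gen theta_powi by simp
  qed
  have "theta (e1 * z) p = 0 \<or> theta (a * z / e1) p = 0" using Dz by (simp add: D_def)
  then show ?thesis
  proof
    assume A: "theta (e1 * z) p = 0"
    then have B: "theta (a * z / e1) p \<noteq> 0" using not_both by blast
    have "th' (e1 * z) \<noteq> 0" using th'_nz[OF _ A] z e10 by simp
    then show ?thesis using A B e10 unfolding D'_def by simp
  next
    assume A: "theta (a * z / e1) p = 0"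
    then have B: "theta (e1 * z) p \<noteq> 0" using not_both by blast
    have "th' (a * z / e1) \<noteq> 0" using th'_nz[OF _ A] z e10 a0 by simp
    then show ?thesis using A B e10 a0 unfolding D'_def by simp
  qed
qed

definition g :: "complex \<Rightarrow> complex" where
  "g z = (if D z = 0 then deriv N z / D' z else N z / D z)"

lemma g_lim_zero:
  assumes z: "z \<noteq> 0" and Dz: "D z = 0"
  shows "(g \<longlongrightarrow> g z) (at z)" and "eventually (\<lambda>w. D w \<noteq> 0) (at z)"
proof -
  note L = lhopital_lim[OF N_deriv[OF z] D_deriv[OF z] D_zero_N[OF z Dz] Dz D'_nz[OF z Dz]]
  show ev: "eventually (\<lambda>w. D w \<noteq> 0) (at z)" by (rule L(2))
  have "((\<lambda>w. N w / D w) \<longlongrightarrow> g z) (at z)" using L(1) Dz by (simp add: g_def)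
  then show "(g \<longlongrightarrow> g z) (at z)"
    by (rule Lim_transform_eventually) (use ev in \<open>eventually_elim, simp add: g_def\<close>)
qed

lemma D_cont: "z \<noteq> 0 \<Longrightarrow> isCont D z"
  using D_deriv DERIV_isCont by blast

lemma g_diff_nz:
  assumes z: "z \<noteq> 0" and Dz: "D z \<noteq> 0"
  shows "g field_differentiable (at z)"
proof -
  obtain d1 where d1: "d1 > 0" "\<And>y. dist z y < d1 \<Longrightarrow> D y \<noteq> 0"
    using continuous_at_avoid[OF D_cont[OF z] Dz] by blast
  have der: "((\<lambda>w. N w / D w) has_field_derivative (deriv N z * D z - N z * D' z) / (D z * D z)) (at z)"
    by (rule DERIV_divide[OF N_deriv[OF z] D_deriv[OF z] Dz])
  have "(g has_field_derivative (deriv N z * D z - N z * D' z) / (D z * D z)) (at z)"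
  proof (rule has_field_derivative_transform_within[OF der d1(1)])
    fix y assume "dist y z < d1"
    then have "D y \<noteq> 0" using d1(2) by (simp add: dist_commute)
    then show "N y / D y = g y" by (simp add: g_def)
  qed simp
  then show ?thesis unfolding field_differentiable_def by blast
qed

lemma g_diff:
  assumes z: "z \<noteq> 0"
  shows "g field_differentiable (at z)"
proof (cases "D z = 0")
  case False then show ?thesis using g_diff_nz z by blast
next
  case True
  note L = g_lim_zero[OF z True]
  obtain d where d: "d > 0" "\<And>w. w \<noteq> z \<Longrightarrow> dist w z < d \<Longrightarrow> D w \<noteq> 0"
    using L(2) unfolding eventually_at by auto
  define r where "r = min d (norm z)"
  have r0: "r > 0" unfolding r_def using d z by simp
  have sub: "ball z r \<subseteq> - {0}"
  proof
    fix w assume "w \<in> ball z r"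
    then have "dist z w < norm z" unfolding r_def by simp
    then show "w \<in> - {0}" by (auto simp: dist_norm)
  qed
  have "g holomorphic_on (ball z r - {z})"
    unfolding holomorphic_on_def
  proof
    fix w assume w: "w \<in> ball z r - {z}"
    then have "w \<noteq> 0" using sub by auto
    moreover have "D w \<noteq> 0" using w d(2)[of w] unfolding r_def by (auto simp: dist_commute)
    ultimately show "g field_differentiable at w within (ball z r - {z})"
      using g_diff_nz field_differentiable_at_within by blast
  qed
  moreover have "(g \<longlongrightarrow> g z) (at z within ball z r)"
    using L(1) by (rule tendsto_within_subset) simp
  ultimately have "g holomorphic_on ball z r"
    using no_isolated_singularity'[of "{z}" g "ball z r"] by auto
  then show ?thesis using r0 by (intro holomorphic_on_imp_differentiable_at[of _ "ball z r"]) auto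
qed

lemma g_cont: "z \<noteq> 0 \<Longrightarrow> isCont g z"
  using g_diff field_differentiable_imp_continuous_at by blast

lemma g_period: assumes z: "z \<noteq> 0" shows "g (p * z) = g z"
proof (cases "D z = 0")
  case False
  have "D (p * z) * (a * z^2) = D z" by (rule D_q[OF z])
  then have Dp: "D (p * z) \<noteq> 0" using False by auto
  have "g (p * z) = N (p * z) / D (p * z)" using Dp by (simp add: g_def)
  also have "\<dots> = (N (p * z) * (a * z^2)) / (D (p * z) * (a * z^2))" using a0 z by simp
  also have "\<dots> = g z" unfolding Nq[OF z] D_q[OF z] using False by (simp add: g_def)
  finally show ?thesis .
next
  case True
  note L = g_lim_zero[OF z True]
  have A: "((\<lambda>w. g (p * w)) \<longlongrightarrow> g (p * z)) (at z)"
    by (rule isCont_tendsto_compose[OF g_cont]) (use z in \<open>auto intro!: tendsto_eq_intros\<close>)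
  have ev: "eventually (\<lambda>w. w \<noteq> 0) (at z)"
  proof -
    have "eventually (\<lambda>w. w \<in> - {0}) (at z)"
      by (rule eventually_at_in_open') (use z in auto)
    then show ?thesis by simp
  qed
  have B: "eventually (\<lambda>w. g (p * w) = g w) (at z)"
    using L(2) ev
  proof eventually_elim
    case (elim w)
    have "D (p * w) * (a * w^2) = D w" by (rule D_q[OF elim(2)])
    then have Dp: "D (p * w) \<noteq> 0" using elim by auto
    have "g (p * w) = N (p * w) / D (p * w)" using Dp by (simp add: g_def)
    also have "\<dots> = (N (p * w) * (a * w^2)) / (D (p * w) * (a * w^2))" using a0 elim by simp
    also have "\<dots> = g w" unfolding Nq[OF elim(2)] D_q[OF elim(2)] using elim by (simp add: g_def)
    finally show ?case .
  qed
  have C: "((\<lambda>w. g (p * w)) \<longlongrightarrow> g z) (at z)"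
    by (rule Lim_transform_eventually[OF L(1)]) (use B in \<open>eventually_elim, simp\<close>)
  show ?thesis using tendsto_unique[OF _ A C] by simp
qed

lemma N_eq_CD: "\<exists>C. \<forall>z. z \<noteq> 0 \<longrightarrow> N z = C * D z"
proof -
  define K where "K = {w::complex. norm p \<le> norm w \<and> norm w \<le> 1}"
  have Kc: "compact K"
  proof -
    have "K = cball 0 1 \<inter> {w. norm p \<le> norm w}" by (auto simp: K_def)
    moreover have "closed {w::complex. norm p \<le> norm w}"
      by (intro closed_Collect_le continuous_intros)
    ultimately show ?thesis using compact_Int_closed[OF compact_cball] by simp
  qed
  have K0: "K \<subseteq> - {0}" unfolding K_def using p0 by auto
  have "continuous_on K g"
    using K0 by (auto intro!: continuous_at_imp_continuous_on g_cont)
  then have bK: "bounded (g ` K)" by (intro compact_imp_bounded compact_continuous_image Kc)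
  define G where "G = (\<lambda>s. g (exp s))"
  have gh: "g holomorphic_on (- {0})"
    unfolding holomorphic_on_def using g_diff field_differentiable_at_within by auto
  have Gh: "G holomorphic_on UNIV"
    unfolding G_def
    using holomorphic_on_compose[of exp UNIV g, OF holomorphic_on_exp holomorphic_on_subset[OF gh]]
    by (auto simp: o_def image_def)
  have "range G \<subseteq> g ` K"
  proof
    fix y assume "y \<in> range G"
    then obtain s where y: "y = g (exp s)" unfolding G_def by auto
    obtain j where j: "norm p \<le> norm (p powi j * exp s)" "norm (p powi j * exp s) \<le> 1"
      using annulus_reduce[of "exp s"] by auto
    have "g (p powi j * exp s) = g (exp s)" by (rule powi_shift[of g, OF g_period]) auto
    moreover have "p powi j * exp s \<in> K" using j by (simp add: K_def)
    ultimately show "y \<in> g ` K" using y by (metis image_eqI)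
  qed
  then have "bounded (range G)" using bK bounded_subset by blast
  then have "G constant_on UNIV" using Liouville_theorem[OF Gh] by blast
  then obtain C where C: "\<And>s. G s = C" unfolding constant_on_def by blast
  have "N z = C * D z" if z: "z \<noteq> 0" for z
  proof (cases "D z = 0")
    case True then show ?thesis using D_zero_N[OF z] by simp
  next
    case False
    have "g z = C" using C[of "Ln z"] z unfolding G_def by simp
    then show ?thesis using False by (simp add: g_def field_simps)
  qed
  then show ?thesis by blast
qed

end

context ptheta begin

lemma theta_lin_holo: "c \<noteq> 0 \<Longrightarrow> (\<lambda>z. theta (c * z) p) holomorphic_on (- {0})"
proof -
  assume c: "c \<noteq> 0"
  have h: "(\<lambda>z. c * z) holomorphic_on (- {0})" by (intro holomorphic_intros)
  have "(\<lambda>x. theta x p) holomorphic_on ((\<lambda>z. c * z) ` (- {0}))"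
    by (rule holomorphic_on_subset[OF theta_holo]) (use c in auto)
  from holomorphic_on_compose[OF h this] show ?thesis by (simp add: o_def)
qed

lemma pair_q: "c1 \<noteq> 0 \<Longrightarrow> c2 \<noteq> 0 \<Longrightarrow> z \<noteq> 0 \<Longrightarrow>
  theta (c1 * (p * z)) p * theta (c2 * (p * z)) p * (c1 * c2 * z^2) = theta (c1 * z) p * theta (c2 * z) p"
proof -
  assume c1: "c1 \<noteq> 0" and c2: "c2 \<noteq> 0" and z: "z \<noteq> 0"
  have 1: "theta (p * (c1 * z)) p * (c1 * z) = - theta (c1 * z) p" by (rule theta_quasi) (use c1 z in auto)
  have 2: "theta (p * (c2 * z)) p * (c2 * z) = - theta (c2 * z) p" by (rule theta_quasi) (use c2 z in auto)
  have "theta (c1 * (p * z)) p * theta (c2 * (p * z)) p * (c1 * c2 * z^2)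
      = (theta (p * (c1 * z)) p * (c1 * z)) * (theta (p * (c2 * z)) p * (c2 * z))"
    by (simp add: algebra_simps power2_eq_square)
  also have "\<dots> = theta (c1 * z) p * theta (c2 * z) p" unfolding 1 2 by simp
  finally show ?thesis .
qed

lemma theta_inv': "x \<noteq> 0 \<Longrightarrow> theta (1 / x) p = - theta x p / x"
  using theta_inv[of x] by (simp add: field_simps)

lemma AF_gen:
  assumes a: "a \<noteq> 0" and e: "e \<noteq> 0" and e1: "e1 \<noteq> 0" and e2: "e2 \<noteq> 0" and z: "z \<noteq> 0"
    and g1: "theta (e1^2 / a) p \<noteq> 0" and g2: "theta (e1 / e2) p \<noteq> 0" and g3: "theta (e1 * e2 / a) p \<noteq> 0"
  shows "theta (e1 * z) p * theta ((a / e1) * z) p * theta (e * e2 / a) p * theta (e / e2) p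
       - theta (e2 * z) p * theta ((a / e2) * z) p * theta (e * e1 / a) p * theta (e / e1) p
       = (e / e1) * theta (e1 * e2 / a) p * theta (e1 / e2) p * theta (e * z) p * theta ((a / e) * z) p"
proof -
  define A1 where "A1 = theta (e * e2 / a) p * theta (e / e2) p"
  define A2 where "A2 = theta (e * e1 / a) p * theta (e / e1) p"
  define B where "B = (e / e1) * theta (e1 * e2 / a) p * theta (e1 / e2) p"
  define N where "N = (\<lambda>z. theta (e1 * z) p * theta ((a / e1) * z) p * A1
       - theta (e2 * z) p * theta ((a / e2) * z) p * A2 - B * (theta (e * z) p * theta ((a / e) * z) p))"
  have Nh: "N holomorphic_on (- {0})"
    unfolding N_def
    by (intro holomorphic_on_diff holomorphic_on_mult holomorphic_on_const theta_lin_holo) (use a e e1 e2 in auto)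
  have Nq: "N (p * z) * (a * z^2) = N z" if z: "z \<noteq> 0" for z
  proof -
    have q1: "theta (e1 * (p * z)) p * theta ((a / e1) * (p * z)) p * (a * z^2) = theta (e1 * z) p * theta ((a / e1) * z) p"
      using pair_q[of e1 "a / e1" z] a e1 z by simp
    have q2: "theta (e2 * (p * z)) p * theta ((a / e2) * (p * z)) p * (a * z^2) = theta (e2 * z) p * theta ((a / e2) * z) p"
      using pair_q[of e2 "a / e2" z] a e2 z by simp
    have q3: "theta (e * (p * z)) p * theta ((a / e) * (p * z)) p * (a * z^2) = theta (e * z) p * theta ((a / e) * z) p"
      using pair_q[of e "a / e" z] a e z by simp
    show ?thesis unfolding N_def using q1 q2 q3 by (simp add: algebra_simps)
  qed
  have t1: "theta 1 p = 0" by (rule theta_one)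
  have i1: "theta (e2 / e1) p = - theta (e1 / e2) p * (e2 / e1)"
    using theta_inv'[of "e1 / e2"] e1 e2 by (simp add: field_simps)
  have i2: "theta (a / (e1 * e2)) p = - theta (e1 * e2 / a) p * (a / (e1 * e2))"
    using theta_inv'[of "e1 * e2 / a"] e1 e2 a by (simp add: field_simps)
  have i3: "theta (a / (e * e1)) p = - theta (e * e1 / a) p * (a / (e * e1))"
    using theta_inv'[of "e * e1 / a"] e1 e a by (simp add: field_simps)
  have i4: "theta (e1 / e) p = - theta (e / e1) p * (e1 / e)"
    using theta_inv'[of "e / e1"] e1 e by (simp add: field_simps)
  have i5: "theta (a / (e * e2)) p = - theta (e * e2 / a) p * (a / (e * e2))"
    using theta_inv'[of "e * e2 / a"] e2 e a by (simp add: field_simps)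
  have N1: "N (1 / e1) = 0"
  proof -
    have "N (1 / e1) = - theta (e2 / e1) p * theta (a / (e1 * e2)) p * A2 - B * (theta (e / e1) p * theta (a / (e * e1)) p)"
      unfolding N_def using e1 t1 by (simp add: field_simps)
    also have "\<dots> = 0" unfolding i1 i2 i3 A2_def B_def using a e e1 e2 by (simp add: field_simps)
    finally show ?thesis .
  qed
  have N2: "N (e1 / a) = 0"
  proof -
    have "N (e1 / a) = - theta (e1 * e2 / a) p * theta (e1 / e2) p * A2 - B * (theta (e * e1 / a) p * theta (e1 / e) p)"
      unfolding N_def using e1 t1 a by (simp add: field_simps)
    also have "\<dots> = 0" unfolding i4 A2_def B_def using a e e1 e2 by (simp add: field_simps)
    finally show ?thesis .
  qed
  interpret L: liou p a e1 N
    by unfold_locales (use p0 p1 a e1 g1 Nh Nq N1 N2 in auto)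
  obtain C where C: "\<And>z. z \<noteq> 0 \<Longrightarrow> N z = C * L.D z" using L.N_eq_CD by blast
  have N3: "N (1 / e2) = 0"
  proof -
    have "N (1 / e2) = theta (e1 / e2) p * theta (a / (e1 * e2)) p * A1 - B * (theta (e / e2) p * theta (a / (e * e2)) p)"
      unfolding N_def using e2 t1 by (simp add: field_simps)
    also have "\<dots> = 0" unfolding i2 i5 A1_def B_def using a e e1 e2 by (simp add: field_simps)
    finally show ?thesis .
  qed
  have D3: "L.D (1 / e2) \<noteq> 0"
  proof -
    have "L.D (1 / e2) = theta (e1 / e2) p * theta (a / (e1 * e2)) p"
      unfolding L.D_def by (simp add: field_simps)
    also have "\<dots> \<noteq> 0" unfolding i2 using g2 g3 a e1 e2 by simp
    finally show ?thesis .
  qed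
  have "C = 0" using C[of "1/e2"] N3 D3 e2 by simp
  then have "N z = 0" using C[OF z] by simp
  then show ?thesis unfolding N_def A1_def A2_def B_def by (simp add: algebra_simps)
qed

lemma ev_theta_nz:
  assumes f: "(f \<longlongrightarrow> y0) F" and y0: "y0 \<noteq> 0" and ne: "eventually (\<lambda>t. f t \<noteq> y0) F"
  shows "eventually (\<lambda>t. theta (f t) p \<noteq> 0) F"
proof (cases "theta y0 p = 0")
  case False
  have "((\<lambda>t. theta (f t) p) \<longlongrightarrow> theta y0 p) F" by (intro tendsto_theta f y0)
  then show ?thesis using tendsto_imp_eventually_ne False by blast
next
  case True
  then obtain j0 where j0: "y0 = p powi j0" using theta_zero_iff[OF y0] by blast
  define r where "r = norm y0 * (1 - norm p) / 2"
  have r0: "r > 0" unfolding r_def using y0 p1 by simp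
  have claim: "theta y p \<noteq> 0" if y: "dist y y0 < r" "y \<noteq> y0" for y
  proof
    assume th: "theta y p = 0"
    have "norm y0 - norm y \<le> dist y y0" by (metis dist_commute dist_norm norm_triangle_ineq2)
    moreover have "norm y - norm y0 \<le> dist y y0" by (simp add: dist_norm norm_triangle_ineq2)
    ultimately have b1: "norm y0 - norm y < r" and b2: "norm y - norm y0 < r" using y by linarith+
    have "norm y0 - r > 0" unfolding r_def using y0 p0 p1 by (simp add: field_simps add_pos_nonneg)
    then have yn: "y \<noteq> 0" using b1 by auto
    obtain j where j: "y = p powi j" using theta_zero_iff[OF yn] th by blast
    have np: "0 < norm p" "norm p < 1" using p0 p1 by auto
    have ny: "norm y = norm p powi j" and ny0: "norm y0 = norm p powi j0"
      using j j0 by (simp_all add: norm_power_int)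
    show False
    proof (cases j j0 rule: linorder_cases)
      case equal then show False using j j0 y by simp
    next
      case greater
      have "norm p powi j \<le> norm p powi (j0 + 1)"
        by (rule power_int_decreasing) (use greater np in auto)
      also have "\<dots> = norm y0 * norm p" by (simp add: power_int_add ny0)
      finally have "norm y \<le> norm y0 * norm p" using ny by simp
      then have "norm y0 - norm y \<ge> norm y0 * (1 - norm p)" by (simp add: algebra_simps)
      moreover have "norm y0 * (1 - norm p) > r" unfolding r_def using y0 np by simp
      ultimately show False using b1 by linarith
    next
      case less
      have "norm p powi (j0 - 1) \<le> norm p powi j"
        by (rule power_int_decreasing) (use less np in auto)
      moreover have "norm p powi (j0 - 1) = norm y0 / norm p" by (simp add: power_int_diff ny0)
      ultimately have "norm y0 / norm p \<le> norm y" using ny by simp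
      moreover have "norm y0 / norm p \<ge> norm y0 * (2 - norm p)"
      proof -
        have "0 \<le> (norm p - 1)^2" by simp
        then have "norm p * (2 - norm p) \<le> 1" by (simp add: power2_eq_square algebra_simps)
        then have "norm y0 * (norm p * (2 - norm p)) \<le> norm y0 * 1" by (intro mult_left_mono) auto
        then show ?thesis using np by (simp add: field_simps)
      qed
      ultimately have "norm y - norm y0 \<ge> norm y0 * (1 - norm p)" by (simp add: algebra_simps)
      moreover have "norm y0 * (1 - norm p) > r" unfolding r_def using y0 np by simp
      ultimately show False using b2 by linarith
    qed
  qed
  have "eventually (\<lambda>t. dist (f t) y0 < r) F" using f r0 by (rule tendstoD)
  then show ?thesis using ne by eventually_elim (use claim in auto)
qed

lemma AF:
  assumes a: "a \<noteq> 0" and e: "e \<noteq> 0" and e1: "e1 \<noteq> 0" and e2: "e2 \<noteq> 0" and z: "z \<noteq> 0"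
    and g2: "theta (e1 / e2) p \<noteq> 0" and g3: "theta (e1 * e2 / a) p \<noteq> 0"
  shows "theta (e1 * z) p * theta ((a / e1) * z) p * theta (e * e2 / a) p * theta (e / e2) p
       - theta (e2 * z) p * theta ((a / e2) * z) p * theta (e * e1 / a) p * theta (e / e1) p
       = (e / e1) * theta (e1 * e2 / a) p * theta (e1 / e2) p * theta (e * z) p * theta ((a / e) * z) p"
proof -
  define F where "F = (at (0::complex))"
  define f where "f = (\<lambda>t::complex. e1 * (1 + t))"
  have f0: "(f \<longlongrightarrow> e1) F" unfolding f_def F_def by (auto intro!: tendsto_eq_intros)
  have ev1: "eventually (\<lambda>t. t \<noteq> 0 \<and> norm t < 1) F"
    unfolding F_def eventually_at by (intro exI[of _ 1]) (auto simp: dist_norm)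
  have evf: "eventually (\<lambda>t. f t \<noteq> 0) F" using ev1
    by eventually_elim (use e1 in \<open>auto simp: f_def add_eq_0_iff\<close>)
  have E1: "eventually (\<lambda>t. theta ((f t)^2 / a) p \<noteq> 0) F"
  proof (rule ev_theta_nz)
    show "((\<lambda>t. (f t)^2 / a) \<longlongrightarrow> e1^2 / a) F" using f0 by (intro tendsto_intros) (use a in auto)
    show "e1^2 / a \<noteq> 0" using e1 a by simp
    show "eventually (\<lambda>t. (f t)^2 / a \<noteq> e1^2 / a) F" using ev1
    proof eventually_elim
      case (elim t)
      have "(1 + t)^2 \<noteq> 1"
      proof
        assume "(1 + t)^2 = 1"
        then have "t * (t + 2) = 0" by (simp add: algebra_simps power2_eq_square)
        then have "t + 2 = 0" using elim by simp
        then have "t = -2" by (simp add: eq_neg_iff_add_eq_0)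
        then show False using elim by simp
      qed
      then show ?case using e1 a by (simp add: f_def power_mult_distrib)
    qed
  qed
  have E2: "eventually (\<lambda>t. theta (f t / e2) p \<noteq> 0) F"
    using tendsto_imp_eventually_ne[OF tendsto_theta[OF tendsto_divide[OF f0 tendsto_const] ] g2] e1 e2 by simp
  have E3: "eventually (\<lambda>t. theta (f t * e2 / a) p \<noteq> 0) F"
    using tendsto_imp_eventually_ne[OF tendsto_theta[OF tendsto_divide[OF tendsto_mult[OF f0 tendsto_const] tendsto_const] ] g3] e1 e2 a by simp
  define LHS where "LHS = (\<lambda>e1. theta (e1 * z) p * theta ((a / e1) * z) p * theta (e * e2 / a) p * theta (e / e2) p
       - theta (e2 * z) p * theta ((a / e2) * z) p * theta (e * e1 / a) p * theta (e / e1) p)"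
  define RHS where "RHS = (\<lambda>e1. (e / e1) * theta (e1 * e2 / a) p * theta (e1 / e2) p * theta (e * z) p * theta ((a / e) * z) p)"
  have ev: "eventually (\<lambda>t. LHS (f t) = RHS (f t)) F"
    using evf E1 E2 E3 by eventually_elim (unfold LHS_def RHS_def, rule AF_gen, use a e e2 z in auto)
  have l1: "((\<lambda>t. LHS (f t)) \<longlongrightarrow> LHS e1) F" unfolding LHS_def
    using f0 a e e1 e2 z by (auto intro!: tendsto_intros)
  have l2: "((\<lambda>t. RHS (f t)) \<longlongrightarrow> RHS e1) F" unfolding RHS_def
    using f0 a e e1 e2 z by (auto intro!: tendsto_intros)
  have l3: "((\<lambda>t. LHS (f t)) \<longlongrightarrow> RHS e1) F"
    by (rule Lim_transform_eventually[OF l2]) (use ev in \<open>eventually_elim, simp\<close>)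
  have "LHS e1 = RHS e1" using tendsto_unique[OF _ l1 l3] unfolding F_def by simp
  then show ?thesis unfolding LHS_def RHS_def .
qed

end

context ptheta begin

definition Den :: "complex \<Rightarrow> ('b \<Rightarrow> complex) \<Rightarrow> 'b set \<Rightarrow> 'b \<Rightarrow> complex" where
  "Den a z S k = (\<Prod>j\<in>S-{k}. theta (z k / z j) p * theta (a * z k * z j) p)"

lemma Den_remove:
  assumes "finite S" "s \<in> S" "k \<noteq> s"
  shows "Den a z S k = theta (z k / z s) p * theta (a * z k * z s) p * Den a z (S - {s}) k"
proof -
  have "S - {k} = insert s (S - {s} - {k})" using assms by auto
  then show ?thesis unfolding Den_def using assms
    by (simp add: prod.insert_remove Diff_insert2[symmetric] insert_commute)
qed

lemma Den_nz:
  assumes "finite S" "\<forall>k\<in>S. \<forall>j\<in>S. j \<noteq> k \<longrightarrow> theta (z k / z j) p \<noteq> 0 \<and> theta (a * z k * z j) p \<noteq> 0"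
    "k \<in> S"
  shows "Den a z S k \<noteq> 0"
  unfolding Den_def using assms by (auto simp: prod_zero_iff)

lemma LI_aux: "zs \<noteq> 0 \<Longrightarrow> zt \<noteq> 0 \<Longrightarrow> X \<noteq> 0 \<Longrightarrow> Y \<noteq> 0 \<Longrightarrow>
   zs / (X * Y) + zt / (- X * (zt / zs) * Y) = (0::complex)"
  by (simp add: field_simps)

lemma LI:
  fixes E :: "'c set" and S :: "'b set"
  assumes "finite E" "finite S" "card S = card E + 2" and a: "a \<noteq> 0"
    and z0: "\<forall>k\<in>S. z k \<noteq> 0" and e0: "\<forall>i\<in>E. e i \<noteq> 0"
    and nd: "\<forall>k\<in>S. \<forall>j\<in>S. j \<noteq> k \<longrightarrow> theta (z k / z j) p \<noteq> 0 \<and> theta (a * z k * z j) p \<noteq> 0"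
  shows "(\<Sum>k\<in>S. z k * (\<Prod>i\<in>E. theta (e i * z k) p * theta (a * z k / e i) p) / Den a z S k) = 0"
  using assms(1,2,3) z0 e0 nd
proof (induction E arbitrary: S rule: finite_induct)
  case empty
  have c2: "card S = 2" using empty.prems by simp
  then obtain s t where st: "S = {s, t}" "s \<noteq> t" by (meson card_2_iff)
  have zs: "z s \<noteq> 0" "z t \<noteq> 0" using empty.prems st by auto
  have i: "theta (z t / z s) p = - theta (z s / z t) p * (z t / z s)"
    using theta_inv'[of "z s / z t"] zs by (simp add: field_simps)
  have nz: "theta (z s / z t) p \<noteq> 0" "theta (a * z s * z t) p \<noteq> 0"
    using empty.prems st by auto
  have Ss: "S - {s} = {t}" and St: "S - {t} = {s}" using st by auto
  have D1: "Den a z S s = theta (z s / z t) p * theta (a * z s * z t) p"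
    unfolding Den_def Ss by simp
  have D2: "Den a z S t = theta (z t / z s) p * theta (a * z s * z t) p"
    unfolding Den_def St by (simp add: ac_simps)
  have "(\<Sum>k\<in>S. z k * (\<Prod>i\<in>{}. theta (e i * z k) p * theta (a * z k / e i) p) / Den a z S k)
      = z s / Den a z S s + z t / Den a z S t" unfolding st using st(2) by simp
  also have "\<dots> = 0" unfolding D1 D2 i using LI_aux[OF zs nz] .
  finally show ?case .
next
  case (insert x E)
  have cS: "card S = card E + 3" using insert by simp
  then have "S \<noteq> {}" by auto
  then obtain s1 where s1: "s1 \<in> S" by blast
  have "card (S - {s1}) = card E + 2" using cS s1 insert.prems by simp
  then have "S - {s1} \<noteq> {}" by (intro notI) simp
  then obtain s2 where s2: "s2 \<in> S - {s1}" by blast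
  have s2S: "s2 \<in> S" and s12: "s2 \<noteq> s1" using s2 by auto
  define P where "P = (\<lambda>k. \<Prod>i\<in>E. theta (e i * z k) p * theta (a * z k / e i) p)"
  define ex where "ex = e x"
  define e1 where "e1 = a * z s1"
  define e2 where "e2 = a * z s2"
  have ex0: "ex \<noteq> 0" unfolding ex_def using insert.prems by auto
  have zs1: "z s1 \<noteq> 0" and zs2: "z s2 \<noteq> 0" using insert.prems s1 s2S by auto
  have e10: "e1 \<noteq> 0" and e20: "e2 \<noteq> 0" unfolding e1_def e2_def using a zs1 zs2 by auto
  have g2: "theta (e1 / e2) p \<noteq> 0" unfolding e1_def e2_def using insert.prems(5) s1 s2S s12 a by auto
  have g3: "theta (e1 * e2 / a) p \<noteq> 0"
  proof -
    have "e1 * e2 / a = a * z s1 * z s2" unfolding e1_def e2_def using a by (simp add: field_simps)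
    then show ?thesis using insert.prems(5) s1 s2S s12 by auto
  qed
  define K where "K = (ex / e1) * theta (e1 * e2 / a) p * theta (e1 / e2) p"
  define \<alpha> where "\<alpha> = theta (ex * e2 / a) p * theta (ex / e2) p"
  define \<beta> where "\<beta> = theta (ex * e1 / a) p * theta (ex / e1) p"
  have K0: "K \<noteq> 0" unfolding K_def using ex0 e10 g2 g3 by simp
  have AFk: "K * (theta (ex * z k) p * theta (a * z k / ex) p)
      = \<alpha> * (theta (e1 * z k) p * theta (a * z k / e1) p) - \<beta> * (theta (e2 * z k) p * theta (a * z k / e2) p)"
    if k: "k \<in> S" for k
  proof -
    have zk: "z k \<noteq> 0" using insert.prems k by auto
    note AF[OF a ex0 e10 e20 zk g2 g3]
    then show ?thesis unfolding K_def \<alpha>_def \<beta>_def by (simp add: algebra_simps)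
  qed
  have IH1: "(\<Sum>k\<in>S - {s1}. z k * P k / Den a z (S - {s1}) k) = 0"
    unfolding P_def
    by (rule insert.IH) (use insert.prems s1 \<open>card (S - {s1}) = card E + 2\<close> in auto)
  have cS2: "card (S - {s2}) = card E + 2" using cS s2S insert.prems by simp
  have IH2: "(\<Sum>k\<in>S - {s2}. z k * P k / Den a z (S - {s2}) k) = 0"
    unfolding P_def
    by (rule insert.IH) (use insert.prems s2S cS2 in auto)
  have split: "(\<Sum>k\<in>S. z k * P k * (theta (a * z s * z k) p * theta (a * z k / (a * z s)) p) / Den a z S k)
      = (\<Sum>k\<in>S - {s}. z k * P k / Den a z (S - {s}) k)" if s: "s \<in> S" for s
  proof -
    have zs: "z s \<noteq> 0" using s insert.prems by auto
    have "(\<Sum>k\<in>S. z k * P k * (theta (a * z s * z k) p * theta (a * z k / (a * z s)) p) / Den a z S k)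
       = z s * P s * (theta (a * z s * z s) p * theta (a * z s / (a * z s)) p) / Den a z S s
         + (\<Sum>k\<in>S - {s}. z k * P k * (theta (a * z s * z k) p * theta (a * z k / (a * z s)) p) / Den a z S k)"
      using s insert.prems by (simp add: sum.remove)
    also have "z s * P s * (theta (a * z s * z s) p * theta (a * z s / (a * z s)) p) / Den a z S s = 0"
      using zs a theta_one by simp
    also have "(\<Sum>k\<in>S - {s}. z k * P k * (theta (a * z s * z k) p * theta (a * z k / (a * z s)) p) / Den a z S k)
        = (\<Sum>k\<in>S - {s}. z k * P k / Den a z (S - {s}) k)"
    proof (rule sum.cong)
      fix k assume k: "k \<in> S - {s}"
      have DR: "Den a z S k = theta (z k / z s) p * theta (a * z k * z s) p * Den a z (S - {s}) k"
        by (rule Den_remove) (use insert.prems s k in auto)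
      have nz1: "theta (z k / z s) p \<noteq> 0" "theta (a * z k * z s) p \<noteq> 0"
        using insert.prems(5) s k by auto
      have eq1: "a * z k / (a * z s) = z k / z s" using a by simp
      have eq2: "a * z s * z k = a * z k * z s" by simp
      show "z k * P k * (theta (a * z s * z k) p * theta (a * z k / (a * z s)) p) / Den a z S k
          = z k * P k / Den a z (S - {s}) k"
        unfolding DR eq1 eq2 using nz1 by simp
    qed simp
    finally show ?thesis by simp
  qed
  have "K * (\<Sum>k\<in>S. z k * (\<Prod>i\<in>insert x E. theta (e i * z k) p * theta (a * z k / e i) p) / Den a z S k)
      = (\<Sum>k\<in>S. z k * P k * (K * (theta (ex * z k) p * theta (a * z k / ex) p)) / Den a z S k)"
    unfolding sum_distrib_left P_def ex_def using insert.hyps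
    by (intro sum.cong) (simp_all add: algebra_simps)
  also have "\<dots> = (\<Sum>k\<in>S. \<alpha> * (z k * P k * (theta (e1 * z k) p * theta (a * z k / e1) p) / Den a z S k)
                    - \<beta> * (z k * P k * (theta (e2 * z k) p * theta (a * z k / e2) p) / Den a z S k))"
    by (intro sum.cong refl, subst AFk) (simp_all add: algebra_simps diff_divide_distrib)
  also have "\<dots> = \<alpha> * (\<Sum>k\<in>S. z k * P k * (theta (e1 * z k) p * theta (a * z k / e1) p) / Den a z S k)
                - \<beta> * (\<Sum>k\<in>S. z k * P k * (theta (e2 * z k) p * theta (a * z k / e2) p) / Den a z S k)"
    by (simp add: sum_subtractf sum_distrib_left)
  also have "\<dots> = 0"
  proof -
    have S1: "(\<Sum>k\<in>S. z k * P k * (theta (e1 * z k) p * theta (a * z k / e1) p) / Den a z S k) = 0"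
      unfolding e1_def using trans[OF split[OF s1] IH1] .
    have S2: "(\<Sum>k\<in>S. z k * P k * (theta (e2 * z k) p * theta (a * z k / e2) p) / Den a z S k) = 0"
      unfolding e2_def using trans[OF split[OF s2S] IH2] .
    show ?thesis unfolding S1 S2 by simp
  qed
  finally show ?case using K0 by simp
qed

end


lemma ef_0[simp]: "ell_fac x q p 0 = 1" by (simp add: ell_fac_def)

lemma ef_Suc: "ell_fac x q p (Suc k) = ell_fac x q p k * theta (x * q ^ k) p"
  by (simp add: ell_fac_def)

lemma ef_add: "ell_fac x q p (m + k) = ell_fac x q p m * ell_fac (x * q ^ m) q p k"
  by (induction k) (simp_all add: ef_Suc power_add mult.assoc)

lemma ef_Suc': "ell_fac x q p (Suc k) = theta x p * ell_fac (x * q) q p k"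
  using ef_add[of x q p 1 k] by (simp add: ell_fac_def)

lemma ef_zero_iff: "ell_fac x q p k = 0 \<longleftrightarrow> (\<exists>i<k. theta (x * q ^ i) p = 0)"
  by (auto simp: ell_fac_def)

lemma prod_rev: "(\<Prod>i<m. f i) = (\<Prod>i<m. f (m - Suc i))" for f :: "nat \<Rightarrow> 'a::comm_monoid_mult"
  by (rule prod.reindex_bij_witness[of _ "\<lambda>i. m - Suc i" "\<lambda>i. m - Suc i"]) auto

text \<open>(x)_j / (x q^{-m})_j = (x q^{j-m})_m / (x q^{-m})_m, multiplicative form\<close>
lemma ef_swap: "ell_fac y q p j * ell_fac (y * q ^ j) q p m = ell_fac y q p m * ell_fac (y * q ^ m) q p j"
  using ef_add[of y q p j m] ef_add[of y q p m j] by (simp add: add.commute)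

lemma prod_split_k:
  fixes f :: "nat \<Rightarrow> 'a::comm_monoid_mult"
  assumes "k \<le> n"
  shows "(\<Prod>j\<in>{..n}-{k}. f j) = (\<Prod>j<k. f j) * (\<Prod>i<n-k. f (Suc k + i))"
proof -
  have e: "{..n}-{k} = {..<k} \<union> {Suc k..n}" using assms by auto
  have "prod f ({..<k} \<union> {Suc k..n}) = prod f {..<k} * prod f {Suc k..n}"
    by (rule prod.union_disjoint) auto
  then have "(\<Prod>j\<in>{..n}-{k}. f j) = (\<Prod>j<k. f j) * (\<Prod>j\<in>{Suc k..n}. f j)"
    unfolding e .
  also have "(\<Prod>j\<in>{Suc k..n}. f j) = (\<Prod>i<n-k. f (Suc k + i))"
    by (rule prod.reindex_bij_witness[of _ "\<lambda>i. Suc k + i" "\<lambda>j. j - Suc k"]) (use assms in auto)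
  finally show ?thesis .
qed

lemma prod_shift_invariant:
  fixes h :: "nat \<Rightarrow> 'a::comm_monoid_mult"
  assumes "k \<le> n"
  shows "(\<Prod>i<n-k. h (Suc i)) * (\<Prod>i<k. h (n - i)) = (\<Prod>i<n. h (Suc i))"
  using assms
proof (induction k)
  case (Suc k)
  have nk: "n - k = Suc (n - Suc k)" using Suc.prems by simp
  have "(\<Prod>i<n - Suc k. h (Suc i)) * (\<Prod>i<Suc k. h (n - i))
      = ((\<Prod>i<n - Suc k. h (Suc i)) * h (n - k)) * (\<Prod>i<k. h (n - i))"
    by (simp add: ac_simps)
  also have "(\<Prod>i<n - Suc k. h (Suc i)) * h (n - k) = (\<Prod>i<n - k. h (Suc i))"
  proof -
    have "(\<Prod>i<Suc (n - Suc k). h (Suc i)) = (\<Prod>i<n - Suc k. h (Suc i)) * h (Suc (n - Suc k))"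
      by (rule prod.lessThan_Suc)
    then show ?thesis by (simp only: nk[symmetric])
  qed
  finally show ?case using Suc by simp
qed simp


locale gset = ptheta +
  fixes q a b :: complex and r n :: nat and c :: "nat \<Rightarrow> complex" and m :: "nat \<Rightarrow> nat"
  assumes q0: "q \<noteq> 0" and a0: "a \<noteq> 0" and b0: "b \<noteq> 0" and c0: "\<And>l. l \<in> {1..r} \<Longrightarrow> c l \<noteq> 0"
    and hn: "n = (\<Sum>l\<in>{1..r}. m l)"
    and H1: "\<And>s. s \<le> 2 * n \<Longrightarrow> theta (a * q ^ s) p \<noteq> 0"
    and H2: "\<And>d. 1 \<le> d \<Longrightarrow> d \<le> n \<Longrightarrow> theta (q ^ d) p \<noteq> 0"
    and H3: "\<And>j. j \<le> n \<Longrightarrow> theta (b * q ^ j) p \<noteq> 0 \<and> theta (a * q ^ j / b) p \<noteq> 0"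
    and H4: "\<And>l. l \<in> {1..r} \<Longrightarrow> ell_fac (c l) q p (m l) \<noteq> 0
        \<and> ell_fac (a * q powi (1 - int (m l)) / c l) q p (m l) \<noteq> 0 \<and> ell_fac (c l / a) q p (m l) \<noteq> 0"
    and H5: "\<And>j l. j \<le> n \<Longrightarrow> l \<in> {1..r} \<Longrightarrow> ell_fac (c l) q p j \<noteq> 0
        \<and> ell_fac (a * q powi (1 - int (m l)) / c l) q p j \<noteq> 0"
begin

abbreviation ef where "ef x k \<equiv> ell_fac x q p k"

definition y :: "nat \<Rightarrow> complex" where "y l = a * q powi (1 - int (m l)) / c l"

lemma y_eq: "y l = a * q / (c l * q ^ m l)"
  unfolding y_def using q0 by (simp add: power_int_diff power_int_of_nat)

definition Phi :: "nat \<Rightarrow> complex" where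
  "Phi k = (\<Prod>l\<in>{1..r}. ef (c l * q ^ k) (m l) * ef (y l * q ^ k) (m l))"

definition hh :: "nat \<Rightarrow> complex" where "hh d = - theta (q ^ d) p / q ^ d"

definition Bk :: "nat \<Rightarrow> complex" where "Bk k = (\<Prod>i<n-k. hh (Suc i))"

definition zz :: "nat \<Rightarrow> complex" where "zz k = (if k \<le> n then q ^ k else b / a)"

definition EE :: "(nat \<times> nat) set" where "EE = Sigma {1..r} (\<lambda>l. {..<m l})"

definition ee :: "nat \<times> nat \<Rightarrow> complex" where "ee x = c (fst x) * q ^ snd x"

definition Fe :: "complex \<Rightarrow> complex" where
  "Fe w = (\<Prod>x\<in>EE. theta (ee x * w) p * theta (a * w / ee x) p)"

definition TT :: "nat \<Rightarrow> complex" where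
  "TT k = zz k * Fe (zz k) / Den a zz {..Suc n} k"

lemma Fe_Sigma: "Fe w = (\<Prod>l\<in>{1..r}. (\<Prod>i<m l. theta (c l * q ^ i * w) p) * (\<Prod>i<m l. theta (a * w / (c l * q ^ i)) p))"
proof -
  have "Fe w = (\<Prod>l\<in>{1..r}. \<Prod>i<m l. theta (c l * q ^ i * w) p * theta (a * w / (c l * q ^ i)) p)"
    unfolding Fe_def EE_def ee_def by (subst prod.Sigma) (auto simp: case_prod_unfold)
  then show ?thesis by (simp add: prod.distrib)
qed

lemma aux_pow: "i < k \<Longrightarrow> q * q ^ (k - Suc i) * q ^ i = q ^ k"
proof -
  assume "i < k"
  then have "Suc (k - Suc i) + i = k" by simp
  then show ?thesis by (metis power_Suc power_add)
qed

lemma ef_y_shift: "ef (y l * q ^ k) (m l) = (\<Prod>i<m l. theta (a * q ^ k / (c l * q ^ i)) p)"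
proof -
  have "ef (y l * q ^ k) (m l) = (\<Prod>i<m l. theta (y l * q ^ k * q ^ (m l - Suc i)) p)"
    unfolding ell_fac_def by (rule prod_rev)
  also have "\<dots> = (\<Prod>i<m l. theta (a * q ^ k / (c l * q ^ i)) p)"
  proof (rule prod.cong[OF refl])
    fix i assume "i \<in> {..<m l}"
    then have e: "q ^ m l = q * q ^ (m l - Suc i) * q ^ i" by (intro aux_pow[symmetric]) auto
    have "y l * q ^ k * q ^ (m l - Suc i) = a * q * q ^ k * q ^ (m l - Suc i) / (c l * (q * q ^ (m l - Suc i) * q ^ i))"
      unfolding y_eq by (subst e) simp
    also have "\<dots> = a * q ^ k / (c l * q ^ i)"
      using q0 by (cases "c l = 0") (simp_all add: field_simps)
    finally have "y l * q ^ k * q ^ (m l - Suc i) = a * q ^ k / (c l * q ^ i)" .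
    then show "theta (y l * q ^ k * q ^ (m l - Suc i)) p = theta (a * q ^ k / (c l * q ^ i)) p" by simp
  qed
  finally show ?thesis .
qed

lemma Fe_q: "Fe (q ^ k) = Phi k"
  unfolding Fe_Sigma Phi_def ef_y_shift
  by (intro prod.cong refl arg_cong2[where f = "(*)"]) (simp_all add: ell_fac_def ac_simps)


lemma Den_k:
  assumes k: "k \<le> n"
  shows "Den a zz {..Suc n} k = ef q k * Bk k * ef (a * q ^ k) k * ef (a * q ^ (2 * k + 1)) (n - k)
           * theta (a * q ^ k / b) p * theta (b * q ^ k) p"
proof -
  have S: "{..Suc n} - {k} = insert (Suc n) ({..n} - {k})" using k by auto
  have "Den a zz {..Suc n} k = theta (zz k / zz (Suc n)) p * theta (a * zz k * zz (Suc n)) p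
          * (\<Prod>j\<in>{..n}-{k}. theta (zz k / zz j) p * theta (a * zz k * zz j) p)"
    unfolding Den_def S by (subst prod.insert) auto
  also have "theta (zz k / zz (Suc n)) p * theta (a * zz k * zz (Suc n)) p = theta (a * q ^ k / b) p * theta (b * q ^ k) p"
    unfolding zz_def using k a0 b0 by (simp add: field_simps)
  also have "(\<Prod>j\<in>{..n}-{k}. theta (zz k / zz j) p * theta (a * zz k * zz j) p)
        = (\<Prod>j\<in>{..n}-{k}. theta (q ^ k / q ^ j) p) * (\<Prod>j\<in>{..n}-{k}. theta (a * q ^ k * q ^ j) p)"
    unfolding prod.distrib[symmetric] using k by (intro prod.cong) (auto simp: zz_def)
  also have "(\<Prod>j\<in>{..n}-{k}. theta (q ^ k / q ^ j) p) = ef q k * Bk k"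
  proof -
    have "(\<Prod>j\<in>{..n}-{k}. theta (q ^ k / q ^ j) p) = (\<Prod>j<k. theta (q ^ k / q ^ j) p) * (\<Prod>i<n-k. theta (q ^ k / q ^ (Suc k + i)) p)"
      by (rule prod_split_k[OF k])
    also have "(\<Prod>j<k. theta (q ^ k / q ^ j) p) = ef q k"
    proof -
      have "(\<Prod>j<k. theta (q ^ k / q ^ j) p) = (\<Prod>i<k. theta (q ^ k / q ^ (k - Suc i)) p)"
        by (rule prod_rev)
      also have "\<dots> = (\<Prod>i<k. theta (q * q ^ i) p)"
      proof (rule prod.cong[OF refl])
        fix i assume "i \<in> {..<k}"
        then have "q * q ^ (k - Suc i) * q ^ i = q ^ k" by (intro aux_pow) auto
        then have "q ^ k / q ^ (k - Suc i) = q * q ^ i" using q0 by (simp add: field_simps)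
        then show "theta (q ^ k / q ^ (k - Suc i)) p = theta (q * q ^ i) p" by simp
      qed
      finally show ?thesis by (simp add: ell_fac_def)
    qed
    also have "(\<Prod>i<n-k. theta (q ^ k / q ^ (Suc k + i)) p) = Bk k"
      unfolding Bk_def
    proof (rule prod.cong[OF refl])
      fix i
      have "q ^ k / q ^ (Suc k + i) = 1 / q ^ Suc i" using q0 by (simp add: power_add field_simps)
      then show "theta (q ^ k / q ^ (Suc k + i)) p = hh (Suc i)"
        unfolding hh_def using theta_inv'[of "q ^ Suc i"] q0 by simp
    qed
    finally show ?thesis .
  qed
  also have "(\<Prod>j\<in>{..n}-{k}. theta (a * q ^ k * q ^ j) p) = ef (a * q ^ k) k * ef (a * q ^ (2 * k + 1)) (n - k)"
  proof -
    have "(\<Prod>j\<in>{..n}-{k}. theta (a * q ^ k * q ^ j) p) = (\<Prod>j<k. theta (a * q ^ k * q ^ j) p) * (\<Prod>i<n-k. theta (a * q ^ k * q ^ (Suc k + i)) p)"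
      by (rule prod_split_k[OF k])
    also have "(\<Prod>i<n-k. theta (a * q ^ k * q ^ (Suc k + i)) p) = ef (a * q ^ (2 * k + 1)) (n - k)"
      unfolding ell_fac_def
    proof (intro prod.cong refl)
      fix i
      have e: "k + (Suc k + i) = 2 * k + 1 + i" by simp
      have "a * q ^ k * q ^ (Suc k + i) = a * q ^ (2 * k + 1) * q ^ i"
        by (simp only: mult.assoc power_add[symmetric] e)
      then show "theta (a * q ^ k * q ^ (Suc k + i)) p = theta (a * q ^ (2 * k + 1) * q ^ i) p" by (simp only:)
    qed
    finally show ?thesis by (simp add: ell_fac_def)
  qed
  finally show ?thesis by (simp add: ac_simps)
qed

lemma a_part:
  assumes k: "k \<le> n"
  shows "theta (a * q ^ (2 * k)) p * ef a k * (ef (a * q ^ k) k * ef (a * q ^ (2 * k + 1)) (n - k))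
       = ef a (Suc n) * ef (a * q ^ (n + 1)) k"
proof -
  have "ef a k * ef (a * q ^ k) k = ef a (2 * k)" unfolding mult_2 by (simp add: ef_add)
  then have "theta (a * q ^ (2 * k)) p * ef a k * ef (a * q ^ k) k = ef a (Suc (2 * k))"
    unfolding ef_Suc[of a q p "2 * k"] by (simp add: mult.commute mult.left_commute)
  have e3: "ef a (Suc (2 * k) + (n - k)) = ef a (Suc (2 * k)) * ef (a * q ^ (2 * k + 1)) (n - k)"
    using ef_add[of a q p "Suc (2 * k)" "n - k"] by simp
  have "theta (a * q ^ (2 * k)) p * ef a k * (ef (a * q ^ k) k * ef (a * q ^ (2 * k + 1)) (n - k))
       = (theta (a * q ^ (2 * k)) p * ef a k * ef (a * q ^ k) k) * ef (a * q ^ (2 * k + 1)) (n - k)"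
    by (simp only: mult.assoc)
  then have "theta (a * q ^ (2 * k)) p * ef a k * (ef (a * q ^ k) k * ef (a * q ^ (2 * k + 1)) (n - k))
       = ef a (Suc (2 * k) + (n - k))"
    unfolding e3 using \<open>theta (a * q ^ (2 * k)) p * ef a k * ef (a * q ^ k) k = ef a (Suc (2 * k))\<close> by simp
  also have "Suc (2 * k) + (n - k) = Suc n + k" using k by simp
  also have "ef a (Suc n + k) = ef a (Suc n) * ef (a * q ^ (n + 1)) k"
    using ef_add[of a q p "Suc n" k] by simp
  finally show ?thesis .
qed

lemma q_part:
  assumes k: "k \<le> n"
  shows "ef (q powi (- int n)) k * Bk k = Bk 0"
proof -
  have "ef (q powi (- int n)) k = (\<Prod>i<k. hh (n - i))"
    unfolding ell_fac_def
  proof (rule prod.cong[OF refl])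
    fix i assume "i \<in> {..<k}"
    then have i: "i \<le> n" using k by simp
    have "q ^ n = q ^ (n - i) * q ^ i" using i by (simp add: power_add[symmetric])
    then have "q powi (- int n) * q ^ i = 1 / q ^ (n - i)" using q0
      by (simp add: power_int_minus power_int_of_nat field_simps)
    then show "theta (q powi (- int n) * q ^ i) p = hh (n - i)"
      unfolding hh_def using theta_inv'[of "q ^ (n - i)"] q0 by simp
  qed
  then show ?thesis unfolding Bk_def using prod_shift_invariant[OF k, of hh] by (simp add: ac_simps)
qed

lemma b_part: "ef b k * theta (b * q ^ k) p = theta b p * ef (b * q) k"
  using ef_Suc[of b q p k] ef_Suc'[of b q p k] by simp

lemma ab_part: "ef (a / b) k * theta (a * q ^ k / b) p = theta (a / b) p * ef (a * q / b) k"
  using ef_Suc[of "a / b" q p k] ef_Suc'[of "a / b" q p k] by simp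

lemma c_part:
  assumes j: "j \<le> n" and l: "l \<in> {1..r}"
  shows "(ef (c l * q ^ m l) j * ef (a * q / c l) j) / (ef (c l) j * ef (a * q powi (1 - int (m l)) / c l) j)
       = (ef (c l * q ^ j) (m l) * ef (y l * q ^ j) (m l)) / (ef (c l) (m l) * ef (y l) (m l))"
proof -
  have s1: "ef (c l) j * ef (c l * q ^ j) (m l) = ef (c l) (m l) * ef (c l * q ^ m l) j" by (rule ef_swap)
  have s2: "ef (y l) j * ef (y l * q ^ j) (m l) = ef (y l) (m l) * ef (y l * q ^ m l) j" by (rule ef_swap)
  have ym: "y l * q ^ m l = a * q / c l" unfolding y_eq using q0 by (simp add: field_simps)
  have n1: "ef (c l) j \<noteq> 0" "ef (y l) j \<noteq> 0" using H5[OF j l] by (auto simp: y_def)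
  have n2: "ef (c l) (m l) \<noteq> 0" "ef (y l) (m l) \<noteq> 0" using H4[OF l] by (auto simp: y_def)
  have e1: "ef (c l * q ^ m l) j = ef (c l) j * ef (c l * q ^ j) (m l) / ef (c l) (m l)"
    using s1 n2 by (simp add: field_simps)
  have e2: "ef (a * q / c l) j = ef (y l) j * ef (y l * q ^ j) (m l) / ef (y l) (m l)"
    using s2 n2 unfolding ym by (simp add: field_simps)
  have fold: "a * q powi (1 - int (m l)) / c l = y l" by (simp add: y_def)
  show ?thesis unfolding fold e1 e2 using n1 n2 by (simp add: field_simps)
qed

end


lemma fld_sum:
  fixes X A U1 U2 An H Dq Bj Q0 Bb tb thb G C tab thab F ta E1 qj Pj P0 :: complex
  assumes "X = An * H / (A * (U1 * U2))" "Dq = Q0 / Bj" "Bb = thb * G / tb" "C = thab * F / tab"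
    and "ta \<noteq> 0" "E1 \<noteq> 0" "F \<noteq> 0" "G \<noteq> 0" "H \<noteq> 0" "Bj \<noteq> 0" "U1 \<noteq> 0" "U2 \<noteq> 0" "tab \<noteq> 0" "tb \<noteq> 0"
       "P0 \<noteq> 0" "A \<noteq> 0"
  shows "X / ta * (A * Bb * C * Dq) / (E1 * F * G * H) * qj * (Pj / P0)
       = (An * Q0 * thb * thab / (ta * P0)) * (qj * Pj / (E1 * Bj * U1 * U2 * tab * tb))"
  using assms(5-) unfolding assms(1-4) by (simp add: field_simps)

context gset begin

lemma node_nz:
  "\<forall>k\<in>{..Suc n}. \<forall>j\<in>{..Suc n}. j \<noteq> k \<longrightarrow> theta (zz k / zz j) p \<noteq> 0 \<and> theta (a * zz k * zz j) p \<noteq> 0"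
proof (intro ballI impI)
  fix k j assume k: "k \<in> {..Suc n}" and j: "j \<in> {..Suc n}" and jk: "j \<noteq> k"
  show "theta (zz k / zz j) p \<noteq> 0 \<and> theta (a * zz k * zz j) p \<noteq> 0"
  proof (cases "k \<le> n")
    case kn: True
    show ?thesis
    proof (cases "j \<le> n")
      case jn: True
      have A: "theta (q ^ k / q ^ j) p \<noteq> 0"
      proof (cases "j < k")
        case True
        then have "q ^ k / q ^ j = q ^ (k - j)" using q0 by (simp add: power_diff)
        then show ?thesis using H2[of "k - j"] True kn by simp
      next
        case False
        then have kj: "k < j" using jk by simp
        then have "q ^ k / q ^ j = 1 / q ^ (j - k)" using q0 by (simp add: power_diff_conv_inverse field_simps)
        then show ?thesis using theta_inv'[of "q ^ (j - k)"] H2[of "j - k"] kj jn q0 by simp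
      qed
      have B: "theta (a * q ^ k * q ^ j) p \<noteq> 0" using H1[of "k + j"] kn jn by (simp add: power_add mult.assoc)
      show ?thesis using A B kn jn by (simp add: zz_def)
    next
      case False
      then have jS: "j = Suc n" using j by simp
      have "zz k / zz j = a * q ^ k / b" "a * zz k * zz j = b * q ^ k"
        unfolding zz_def jS using kn a0 b0 by (simp_all add: field_simps)
      then show ?thesis using H3[OF kn] by simp
    qed
  next
    case False
    then have kS: "k = Suc n" using k by simp
    then have jn: "j \<le> n" using j jk by auto
    have "zz k / zz j = 1 / (a * q ^ j / b)" "a * zz k * zz j = b * q ^ j"
      unfolding zz_def kS using jn a0 b0 q0 by (simp_all add: field_simps)
    then show ?thesis using H3[OF jn] theta_inv'[of "a * q ^ j / b"] a0 b0 q0 by simp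
  qed
qed

lemma card_EE: "card EE = n"
  unfolding EE_def hn by simp

lemma LI_app: "(\<Sum>k\<in>{..Suc n}. TT k) = 0"
proof -
  have "(\<Sum>k\<in>{..Suc n}. zz k * (\<Prod>i\<in>EE. theta (ee i * zz k) p * theta (a * zz k / ee i) p) / Den a zz {..Suc n} k) = 0"
  proof (rule LI)
    show "finite EE" unfolding EE_def by simp
    show "card {..Suc n} = card EE + 2" using card_EE by simp
    show "\<forall>k\<in>{..Suc n}. zz k \<noteq> 0" using q0 a0 b0 by (simp add: zz_def)
    show "\<forall>i\<in>EE. ee i \<noteq> 0" using q0 c0 by (auto simp: EE_def ee_def)
  qed (use a0 node_nz in auto)
  then show ?thesis unfolding TT_def Fe_def .
qed


lemma ef_nzI: "(\<And>i. i < k \<Longrightarrow> theta (x * q ^ i) p \<noteq> 0) \<Longrightarrow> ef x k \<noteq> 0"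
  by (auto simp: ef_zero_iff)

definition summand :: "nat \<Rightarrow> complex" where
 "summand j = theta (a * q ^ (2 * j)) p / theta a p
            * (ell_fac a q p j * ell_fac b q p j * ell_fac (a / b) q p j * ell_fac (q powi (- int n)) q p j)
            / (ell_fac q q p j * ell_fac (a * q / b) q p j * ell_fac (b * q) q p j * ell_fac (a * q ^ (n + 1)) q p j)
            * q ^ j
            * (\<Prod>l\<in>{1..r}. (ell_fac (c l * q ^ m l) q p j * ell_fac (a * q / c l) q p j)
                 / (ell_fac (c l) q p j * ell_fac (a * q powi (1 - int (m l)) / c l) q p j))"

definition KK :: complex where "KK = ef a (Suc n) * Bk 0 * theta b p * theta (a / b) p / (theta a p * Phi 0)"

lemma Phi0_nz: "Phi 0 \<noteq> 0"
  unfolding Phi_def using H4 by (auto simp: prod_zero_iff y_def)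

lemma Bk_nz: "Bk k \<noteq> 0"
proof -
  have "- theta (q ^ Suc i) p / q ^ Suc i \<noteq> 0" if "i \<in> {..<n - k}" for i
    using H2[of "Suc i"] q0 that by simp
  then show ?thesis unfolding Bk_def hh_def by (simp add: prod_zero_iff)
qed

lemma summand_eq:
  assumes j: "j \<le> n"
  shows "summand j = KK * TT j"
proof -
  have R: "(\<Prod>l\<in>{1..r}. (ef (c l * q ^ m l) j * ef (a * q / c l) j)
                 / (ef (c l) j * ef (a * q powi (1 - int (m l)) / c l) j)) = Phi j / Phi 0"
  proof -
    have "(\<Prod>l\<in>{1..r}. (ef (c l * q ^ m l) j * ef (a * q / c l) j)
                 / (ef (c l) j * ef (a * q powi (1 - int (m l)) / c l) j))
        = (\<Prod>l\<in>{1..r}. (ef (c l * q ^ j) (m l) * ef (y l * q ^ j) (m l)) / (ef (c l) (m l) * ef (y l) (m l)))"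
      by (intro prod.cong refl c_part j) auto
    also have "\<dots> = Phi j / Phi 0" unfolding prod_dividef Phi_def by simp
    finally show ?thesis .
  qed
  have T: "TT j = q ^ j * Phi j / (ef q j * Bk j * ef (a * q ^ j) j * ef (a * q ^ (2 * j + 1)) (n - j)
           * theta (a * q ^ j / b) p * theta (b * q ^ j) p)"
    unfolding TT_def Den_k[OF j] using j by (simp add: zz_def Fe_q)
  have A0: "ef a j \<noteq> 0" using H1 j by (intro ef_nzI) auto
  have U10: "ef (a * q ^ j) j \<noteq> 0"
    by (intro ef_nzI) (use H1 j in \<open>auto simp: mult.assoc power_add[symmetric]\<close>)
  have U20: "ef (a * q ^ (2 * j + 1)) (n - j) \<noteq> 0"
  proof (rule ef_nzI)
    fix i assume "i < n - j"
    then show "theta (a * q ^ (2 * j + 1) * q ^ i) p \<noteq> 0"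
      using H1[of "2 * j + 1 + i"] j by (simp add: mult.assoc power_add[symmetric])
  qed
  have E10: "ef q j \<noteq> 0"
  proof (rule ef_nzI)
    fix i assume "i < j"
    then show "theta (q * q ^ i) p \<noteq> 0" using H2[of "Suc i"] j by simp
  qed
  have F0: "ef (a * q / b) j \<noteq> 0"
  proof (rule ef_nzI)
    fix i assume "i < j"
    moreover have "a * q / b * q ^ i = a * q ^ Suc i / b" by simp
    ultimately show "theta (a * q / b * q ^ i) p \<noteq> 0" using H3[of "Suc i"] j by (simp add: mult.assoc)
  qed
  have G0: "ef (b * q) j \<noteq> 0"
  proof (rule ef_nzI)
    fix i assume "i < j"
    moreover have "b * q * q ^ i = b * q ^ Suc i" by simp
    ultimately show "theta (b * q * q ^ i) p \<noteq> 0" using H3[of "Suc i"] j by (simp add: mult.assoc)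
  qed
  have H0: "ef (a * q ^ (n + 1)) j \<noteq> 0"
  proof (rule ef_nzI)
    fix i assume "i < j"
    then show "theta (a * q ^ (n + 1) * q ^ i) p \<noteq> 0"
      using H1[of "n + 1 + i"] j by (simp add: mult.assoc power_add[symmetric])
  qed
  have ta: "theta a p \<noteq> 0" using H1[of 0] by simp
  have tb: "theta (b * q ^ j) p \<noteq> 0" and tab: "theta (a * q ^ j / b) p \<noteq> 0" using H3[OF j] by auto
  have eX: "theta (a * q ^ (2 * j)) p = ef a (Suc n) * ef (a * q ^ (n + 1)) j / (ef a j * (ef (a * q ^ j) j * ef (a * q ^ (2 * j + 1)) (n - j)))"
    using a_part[OF j] A0 U10 U20 by (simp add: field_simps)
  have eD: "ef (q powi (- int n)) j = Bk 0 / Bk j" using q_part[OF j] Bk_nz by (simp add: field_simps)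
  have eB: "ef b j = theta b p * ef (b * q) j / theta (b * q ^ j) p" using b_part[of j] tb by (simp add: field_simps)
  have eC: "ef (a / b) j = theta (a / b) p * ef (a * q / b) j / theta (a * q ^ j / b) p"
    using ab_part[of j] tab by (simp add: field_simps)
  show ?thesis
    unfolding summand_def R T KK_def
    by (rule fld_sum[OF eX eD eB eC ta E10 F0 G0 H0 Bk_nz U10 U20 tab tb Phi0_nz A0])
qed

end


lemma fld_rhs:
  fixes Eq Aq Fn Gn PCB PBCA PCC PCA PNb PNa ta tb tab Qs SJ ba w :: complex
  assumes "PNb = w * PNa" "SJ = - ba * w * Qs"
    and "ta \<noteq> 0" "tb \<noteq> 0" "tab \<noteq> 0" "Fn \<noteq> 0" "Gn \<noteq> 0" "PCC \<noteq> 0" "PCA \<noteq> 0" "PNa \<noteq> 0"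
      "Qs \<noteq> 0" "ba \<noteq> 0" "w \<noteq> 0"
  shows "(Eq * Aq) / (Fn * Gn) * ((PCB * PBCA) / (PCC * PCA))
    = - (ta * Aq * (Eq * Qs) * tb * tab / (ta * (PCC * (PCA * PNa))))
      * (ba * (PBCA * (PCB * PNb)) / ((tab * Fn) * (tb * Gn) * SJ))"
  using assms(3-) unfolding assms(1,2) by (simp add: field_simps)

context gset begin

definition RHSv :: complex where
  "RHSv = (ell_fac q q p n * ell_fac (a * q) q p n) / (ell_fac (a * q / b) q p n * ell_fac (b * q) q p n)
         * (\<Prod>l\<in>{1..r}. (ell_fac (c l / b) q p (m l) * ell_fac (b * c l / a) q p (m l))
                 / (ell_fac (c l) q p (m l) * ell_fac (c l / a) q p (m l)))"

definition Nb :: "nat \<Rightarrow> complex" where "Nb l = (\<Prod>i<m l. - (b / (c l * q ^ i)))"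
definition Na :: "nat \<Rightarrow> complex" where "Na l = (\<Prod>i<m l. - (a / (c l * q ^ i)))"
definition Qs :: complex where "Qs = (\<Prod>i<n. - (1 / q ^ Suc i))"
definition SJ :: complex where "SJ = (\<Prod>j<Suc n. - (b / (a * q ^ j)))"

lemma Den_last: "Den a zz {..Suc n} (Suc n) = ef (a / b) (Suc n) * ef b (Suc n) * SJ"
proof -
  have S: "{..Suc n} - {Suc n} = {..<Suc n}" by auto
  have "Den a zz {..Suc n} (Suc n) = (\<Prod>j<Suc n. theta (a / b * q ^ j) p * theta (b * q ^ j) p * - (b / (a * q ^ j)))"
    unfolding Den_def S
  proof (rule prod.cong[OF refl])
    fix j assume "j \<in> {..<Suc n}"
    then have j: "j \<le> n" by simp
    have e1: "zz (Suc n) / zz j = 1 / (a / b * q ^ j)" unfolding zz_def using j a0 b0 q0 by (simp add: field_simps)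
    have e2: "a * zz (Suc n) * zz j = b * q ^ j" unfolding zz_def using j a0 by simp
    have "theta (1 / (a / b * q ^ j)) p = theta (a / b * q ^ j) p * - (b / (a * q ^ j))"
      using theta_inv'[of "a / b * q ^ j"] a0 b0 q0 by (simp add: field_simps)
    then show "theta (zz (Suc n) / zz j) p * theta (a * zz (Suc n) * zz j) p
        = theta (a / b * q ^ j) p * theta (b * q ^ j) p * - (b / (a * q ^ j))"
      unfolding e1 e2 by (simp add: ac_simps)
  qed
  also have "\<dots> = ef (a / b) (Suc n) * ef b (Suc n) * SJ"
    unfolding SJ_def ell_fac_def prod.distrib by simp
  finally show ?thesis .
qed

lemma Fe_last: "Fe (b / a) = (\<Prod>l\<in>{1..r}. ef (b * c l / a) (m l) * ef (c l / b) (m l) * Nb l)"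
  unfolding Fe_Sigma
proof (rule prod.cong[OF refl])
  fix l assume l: "l \<in> {1..r}"
  have cl: "c l \<noteq> 0" using c0 l by simp
  have 1: "(\<Prod>i<m l. theta (c l * q ^ i * (b / a)) p) = ef (b * c l / a) (m l)"
    unfolding ell_fac_def by (intro prod.cong refl) (simp add: ac_simps)
  have 2: "(\<Prod>i<m l. theta (a * (b / a) / (c l * q ^ i)) p) = ef (c l / b) (m l) * Nb l"
  proof -
    have "(\<Prod>i<m l. theta (a * (b / a) / (c l * q ^ i)) p) = (\<Prod>i<m l. theta (c l / b * q ^ i) p * - (b / (c l * q ^ i)))"
    proof (rule prod.cong[OF refl])
      fix i
      have e: "a * (b / a) / (c l * q ^ i) = 1 / (c l / b * q ^ i)" using a0 b0 cl q0 by (simp add: field_simps)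
      show "theta (a * (b / a) / (c l * q ^ i)) p = theta (c l / b * q ^ i) p * - (b / (c l * q ^ i))"
        unfolding e using theta_inv'[of "c l / b * q ^ i"] b0 cl q0 by (simp add: field_simps)
    qed
    then show ?thesis unfolding Nb_def ell_fac_def prod.distrib by simp
  qed
  show "(\<Prod>i<m l. theta (c l * q ^ i * (b / a)) p) * (\<Prod>i<m l. theta (a * (b / a) / (c l * q ^ i)) p)
      = ef (b * c l / a) (m l) * ef (c l / b) (m l) * Nb l"
    unfolding 1 2 by (simp add: ac_simps)
qed

lemma Phi0_eq: "Phi 0 = (\<Prod>l\<in>{1..r}. ef (c l) (m l) * (ef (c l / a) (m l) * Na l))"
  unfolding Phi_def
proof (rule prod.cong[OF refl])
  fix l assume l: "l \<in> {1..r}"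
  have cl: "c l \<noteq> 0" using c0 l by simp
  have "ef (y l * q ^ 0) (m l) = (\<Prod>i<m l. theta (c l / a * q ^ i) p * - (a / (c l * q ^ i)))"
    unfolding ef_y_shift
  proof (rule prod.cong[OF refl])
    fix i
    have e: "a * q ^ 0 / (c l * q ^ i) = 1 / (c l / a * q ^ i)" using a0 cl q0 by (simp add: field_simps)
    show "theta (a * q ^ 0 / (c l * q ^ i)) p = theta (c l / a * q ^ i) p * - (a / (c l * q ^ i))"
      unfolding e using theta_inv'[of "c l / a * q ^ i"] a0 cl q0 by (simp add: field_simps)
  qed
  also have "\<dots> = ef (c l / a) (m l) * Na l" unfolding Na_def ell_fac_def prod.distrib by simp
  finally show "ef (c l * q ^ 0) (m l) * ef (y l * q ^ 0) (m l) = ef (c l) (m l) * (ef (c l / a) (m l) * Na l)"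
    by simp
qed

lemma Bk0_eq: "Bk 0 = ef q n * Qs"
proof -
  have "Bk 0 = (\<Prod>i<n. theta (q * q ^ i) p * - (1 / q ^ Suc i))"
    unfolding Bk_def hh_def
  proof (intro prod.cong)
    fix x
    have e: "q ^ Suc x = q * q ^ x" by (rule power_Suc)
    show "- theta (q ^ Suc x) p / q ^ Suc x = theta (q * q ^ x) p * - (1 / q ^ Suc x)"
      unfolding e by simp
  qed simp
  then show ?thesis unfolding Qs_def ell_fac_def prod.distrib by simp
qed

lemma SJ_eq: "SJ = - (b / a) * (b / a) ^ n * Qs"
proof -
  have "SJ = - (b / (a * q ^ 0)) * (\<Prod>i<n. - (b / (a * q ^ Suc i)))"
    unfolding SJ_def by (rule prod.lessThan_Suc_shift)
  also have "(\<Prod>i<n. - (b / (a * q ^ Suc i))) = (\<Prod>i<n. (b / a) * - (1 / q ^ Suc i))"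
    by (intro prod.cong refl) (simp add: field_simps)
  also have "\<dots> = (b / a) ^ n * Qs" unfolding Qs_def prod.distrib by simp
  finally show ?thesis by simp
qed

lemma Nb_Na: "(\<Prod>l\<in>{1..r}. Nb l) = (b / a) ^ n * (\<Prod>l\<in>{1..r}. Na l)"
proof -
  have "Nb l = (b / a) ^ m l * Na l" if l: "l \<in> {1..r}" for l
  proof -
    have cl: "c l \<noteq> 0" using c0 l by simp
    have "Nb l = (\<Prod>i<m l. (b / a) * - (a / (c l * q ^ i)))"
      unfolding Nb_def by (intro prod.cong refl) (use a0 cl q0 in \<open>simp add: field_simps\<close>)
    then show ?thesis unfolding Na_def prod.distrib by simp
  qed
  then have "(\<Prod>l\<in>{1..r}. Nb l) = (\<Prod>l\<in>{1..r}. (b / a) ^ m l * Na l)" by (rule prod.cong[OF refl])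
  also have "\<dots> = (b / a) ^ n * (\<Prod>l\<in>{1..r}. Na l)" unfolding prod.distrib hn by (simp add: power_sum)
  finally show ?thesis .
qed

lemma rhs_eq: "RHSv = - KK * TT (Suc n)"
proof -
  have TT: "TT (Suc n) = (b / a) * (\<Prod>l\<in>{1..r}. ef (b * c l / a) (m l) * ef (c l / b) (m l) * Nb l)
      / (ef (a / b) (Suc n) * ef b (Suc n) * SJ)"
    unfolding TT_def Den_last by (simp add: zz_def Fe_last)
  have P1: "(\<Prod>l\<in>{1..r}. ef (b * c l / a) (m l) * ef (c l / b) (m l) * Nb l)
      = (\<Prod>l\<in>{1..r}. ef (b * c l / a) (m l)) * ((\<Prod>l\<in>{1..r}. ef (c l / b) (m l)) * (\<Prod>l\<in>{1..r}. Nb l))"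
    by (simp add: prod.distrib ac_simps)
  have P2: "(\<Prod>l\<in>{1..r}. ef (c l) (m l) * (ef (c l / a) (m l) * Na l))
      = (\<Prod>l\<in>{1..r}. ef (c l) (m l)) * ((\<Prod>l\<in>{1..r}. ef (c l / a) (m l)) * (\<Prod>l\<in>{1..r}. Na l))"
    by (simp add: prod.distrib)
  have P3: "(\<Prod>l\<in>{1..r}. (ef (c l / b) (m l) * ef (b * c l / a) (m l)) / (ef (c l) (m l) * ef (c l / a) (m l)))
      = ((\<Prod>l\<in>{1..r}. ef (c l / b) (m l)) * (\<Prod>l\<in>{1..r}. ef (b * c l / a) (m l)))
        / ((\<Prod>l\<in>{1..r}. ef (c l) (m l)) * (\<Prod>l\<in>{1..r}. ef (c l / a) (m l)))"
    by (simp add: prod_dividef prod.distrib)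
  have sA: "ef a (Suc n) = theta a p * ef (a * q) n" by (rule ef_Suc')
  have sB: "ef b (Suc n) = theta b p * ef (b * q) n" by (rule ef_Suc')
  have sAB: "ef (a / b) (Suc n) = theta (a / b) p * ef (a * q / b) n" using ef_Suc'[of "a / b" q p n] by simp
  have ta: "theta a p \<noteq> 0" using H1[of 0] by simp
  have tb: "theta b p \<noteq> 0" and tab: "theta (a / b) p \<noteq> 0" using H3[of 0] by auto
  have Fn: "ef (a * q / b) n \<noteq> 0"
  proof (rule ef_nzI)
    fix i assume "i < n"
    moreover have "a * q / b * q ^ i = a * q ^ Suc i / b" by simp
    ultimately show "theta (a * q / b * q ^ i) p \<noteq> 0" using H3[of "Suc i"] by (simp add: mult.assoc)
  qed
  have Gn: "ef (b * q) n \<noteq> 0"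
  proof (rule ef_nzI)
    fix i assume "i < n"
    moreover have "b * q * q ^ i = b * q ^ Suc i" by simp
    ultimately show "theta (b * q * q ^ i) p \<noteq> 0" using H3[of "Suc i"] by (simp add: mult.assoc)
  qed
  have PCC: "(\<Prod>l\<in>{1..r}. ef (c l) (m l)) \<noteq> 0" and PCA: "(\<Prod>l\<in>{1..r}. ef (c l / a) (m l)) \<noteq> 0"
    using H4 by (auto simp: prod_zero_iff)
  have PNa: "(\<Prod>l\<in>{1..r}. Na l) \<noteq> 0"
    unfolding Na_def using a0 q0 c0 by (auto simp: prod_zero_iff)
  have Qs0: "Qs \<noteq> 0" unfolding Qs_def using q0 by (auto simp: prod_zero_iff)
  show ?thesis
    unfolding RHSv_def KK_def TT Phi0_eq Bk0_eq sA sB sAB P1 P2 P3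
    by (rule fld_rhs[OF Nb_Na SJ_eq ta tb tab Fn Gn PCC PCA PNa Qs0]) (use a0 b0 in auto)
qed

lemma gen_main: "(\<Sum>j\<le>n. summand j) = RHSv"
proof -
  have "(\<Sum>k\<in>{..Suc n}. TT k) = (\<Sum>k\<le>n. TT k) + TT (Suc n)" by simp
  then have s: "(\<Sum>k\<le>n. TT k) = - TT (Suc n)" using LI_app by (simp add: eq_neg_iff_add_eq_0)
  have "(\<Sum>j\<le>n. summand j) = (\<Sum>j\<le>n. KK * TT j)" by (intro sum.cong refl summand_eq) auto
  also have "\<dots> = KK * (- TT (Suc n))" unfolding sum_distrib_left[symmetric] s ..
  also have "\<dots> = RHSv" using rhs_eq by simp
  finally show ?thesis .
qed

end


definition Lf :: "complex \<Rightarrow> complex \<Rightarrow> nat \<Rightarrow> nat \<Rightarrow> (nat \<Rightarrow> complex) \<Rightarrow> (nat \<Rightarrow> nat) \<Rightarrow> complex \<Rightarrow> complex \<Rightarrow> complex" where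
  "Lf p q r n c m a b = (\<Sum>j\<le>n. theta (a * q ^ (2 * j)) p / theta a p
            * (ell_fac a q p j * ell_fac b q p j * ell_fac (a / b) q p j
               * ell_fac (q powi (- int n)) q p j)
            / (ell_fac q q p j * ell_fac (a * q / b) q p j * ell_fac (b * q) q p j
               * ell_fac (a * q ^ (n + 1)) q p j)
            * q ^ j
            * (\<Prod>l\<in>{1..r}. (ell_fac (c l * q ^ m l) q p j * ell_fac (a * q / c l) q p j)
                 / (ell_fac (c l) q p j * ell_fac (a * q powi (1 - int (m l)) / c l) q p j)))"

definition Rf :: "complex \<Rightarrow> complex \<Rightarrow> nat \<Rightarrow> nat \<Rightarrow> (nat \<Rightarrow> complex) \<Rightarrow> (nat \<Rightarrow> nat) \<Rightarrow> complex \<Rightarrow> complex \<Rightarrow> complex" where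
  "Rf p q r n c m a b = (ell_fac q q p n * ell_fac (a * q) q p n) / (ell_fac (a * q / b) q p n * ell_fac (b * q) q p n)
         * (\<Prod>l\<in>{1..r}. (ell_fac (c l / b) q p (m l) * ell_fac (b * c l / a) q p (m l))
                 / (ell_fac (c l) q p (m l) * ell_fac (c l / a) q p (m l)))"

context ptheta begin

lemma tendsto_ef:
  assumes "(f \<longlongrightarrow> x) F" "x \<noteq> 0" "q \<noteq> 0"
  shows "((\<lambda>t. ell_fac (f t) q p k) \<longlongrightarrow> ell_fac x q p k) F"
  unfolding ell_fac_def using assms by (intro tendsto_prod tendsto_theta tendsto_mult tendsto_const) auto

lemma Lf_tendsto:
  assumes A: "(A \<longlongrightarrow> a) F" and B: "(B \<longlongrightarrow> b) F"
    and nz: "a \<noteq> 0" "b \<noteq> 0" "q \<noteq> 0" "\<And>l. l \<in> {1..r} \<Longrightarrow> c l \<noteq> 0"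
    and den1: "theta a p \<noteq> 0"
    and den2: "\<And>j. j \<le> n \<Longrightarrow>
       ell_fac q q p j * ell_fac (a * q / b) q p j * ell_fac (b * q) q p j
         * ell_fac (a * q ^ (n + 1)) q p j \<noteq> 0"
    and den3: "\<And>j l. j \<le> n \<Longrightarrow> l \<in> {1..r} \<Longrightarrow>
       ell_fac (c l) q p j * ell_fac (a * q powi (1 - int (m l)) / c l) q p j \<noteq> 0"
  shows "((\<lambda>t. Lf p q r n c m (A t) (B t)) \<longlongrightarrow> Lf p q r n c m a b) F"
  unfolding Lf_def
proof (intro tendsto_sum)
  fix j assume j: "j \<in> {..n}"
  have P: "((\<lambda>t. \<Prod>l\<in>{1..r}. (ell_fac (c l * q ^ m l) q p j * ell_fac (A t * q / c l) q p j)
                 / (ell_fac (c l) q p j * ell_fac (A t * q powi (1 - int (m l)) / c l) q p j))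
        \<longlongrightarrow> (\<Prod>l\<in>{1..r}. (ell_fac (c l * q ^ m l) q p j * ell_fac (a * q / c l) q p j)
                 / (ell_fac (c l) q p j * ell_fac (a * q powi (1 - int (m l)) / c l) q p j))) F"
  proof (intro tendsto_prod)
    fix l assume l: "l \<in> {1..r}"
    show "((\<lambda>t. (ell_fac (c l * q ^ m l) q p j * ell_fac (A t * q / c l) q p j)
                 / (ell_fac (c l) q p j * ell_fac (A t * q powi (1 - int (m l)) / c l) q p j))
        \<longlongrightarrow> (ell_fac (c l * q ^ m l) q p j * ell_fac (a * q / c l) q p j)
                 / (ell_fac (c l) q p j * ell_fac (a * q powi (1 - int (m l)) / c l) q p j)) F"
      by (intro tendsto_divide tendsto_mult tendsto_const tendsto_ef A den3)
         (use j l nz in auto)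
  qed
  show "((\<lambda>t. theta (A t * q ^ (2 * j)) p / theta (A t) p
            * (ell_fac (A t) q p j * ell_fac (B t) q p j * ell_fac (A t / B t) q p j
               * ell_fac (q powi (- int n)) q p j)
            / (ell_fac q q p j * ell_fac (A t * q / B t) q p j * ell_fac (B t * q) q p j
               * ell_fac (A t * q ^ (n + 1)) q p j)
            * q ^ j
            * (\<Prod>l\<in>{1..r}. (ell_fac (c l * q ^ m l) q p j * ell_fac (A t * q / c l) q p j)
                 / (ell_fac (c l) q p j * ell_fac (A t * q powi (1 - int (m l)) / c l) q p j)))
       \<longlongrightarrow> theta (a * q ^ (2 * j)) p / theta a p
            * (ell_fac a q p j * ell_fac b q p j * ell_fac (a / b) q p j
               * ell_fac (q powi (- int n)) q p j)
            / (ell_fac q q p j * ell_fac (a * q / b) q p j * ell_fac (b * q) q p j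
               * ell_fac (a * q ^ (n + 1)) q p j)
            * q ^ j
            * (\<Prod>l\<in>{1..r}. (ell_fac (c l * q ^ m l) q p j * ell_fac (a * q / c l) q p j)
                 / (ell_fac (c l) q p j * ell_fac (a * q powi (1 - int (m l)) / c l) q p j))) F"
    by (intro tendsto_mult tendsto_divide tendsto_theta tendsto_ef tendsto_const A B P den1 den2)
       (use j nz in auto)
qed

lemma Rf_tendsto:
  assumes A: "(A \<longlongrightarrow> a) F" and B: "(B \<longlongrightarrow> b) F"
    and nz: "a \<noteq> 0" "b \<noteq> 0" "q \<noteq> 0" "\<And>l. l \<in> {1..r} \<Longrightarrow> c l \<noteq> 0"
    and den4: "ell_fac (a * q / b) q p n * ell_fac (b * q) q p n \<noteq> 0"
    and den5: "\<And>l. l \<in> {1..r} \<Longrightarrow> ell_fac (c l) q p (m l) * ell_fac (c l / a) q p (m l) \<noteq> 0"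
  shows "((\<lambda>t. Rf p q r n c m (A t) (B t)) \<longlongrightarrow> Rf p q r n c m a b) F"
  unfolding Rf_def
  by (intro tendsto_mult tendsto_divide tendsto_prod tendsto_ef tendsto_const A B den4 den5)
     (use nz in auto)

end


theorem proposition2p5:
  fixes p q a b :: complex and r n :: nat and c :: "nat \<Rightarrow> complex" and m :: "nat \<Rightarrow> nat"
  assumes hp: "0 < norm p" "norm p < 1"
    and hnz: "a \<noteq> 0" "b \<noteq> 0" "q \<noteq> 0" "\<And>l. l \<in> {1..r} \<Longrightarrow> c l \<noteq> 0"
    and hn: "n = (\<Sum>l\<in>{1..r}. m l)"
    and den1: "theta a p \<noteq> 0"
    and den2: "\<And>j. j \<le> n \<Longrightarrow>
       ell_fac q q p j * ell_fac (a * q / b) q p j * ell_fac (b * q) q p j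
         * ell_fac (a * q ^ (n + 1)) q p j \<noteq> 0"
    and den3: "\<And>j l. j \<le> n \<Longrightarrow> l \<in> {1..r} \<Longrightarrow>
       ell_fac (c l) q p j * ell_fac (a * q powi (1 - int (m l)) / c l) q p j \<noteq> 0"
    and den4: "ell_fac (a * q / b) q p n * ell_fac (b * q) q p n \<noteq> 0"
    and den5: "\<And>l. l \<in> {1..r} \<Longrightarrow> ell_fac (c l) q p (m l) * ell_fac (c l / a) q p (m l) \<noteq> 0"
  shows "(\<Sum>j\<le>n. theta (a * q ^ (2 * j)) p / theta a p
            * (ell_fac a q p j * ell_fac b q p j * ell_fac (a / b) q p j
               * ell_fac (q powi (- int n)) q p j)
            / (ell_fac q q p j * ell_fac (a * q / b) q p j * ell_fac (b * q) q p j
               * ell_fac (a * q ^ (n + 1)) q p j)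
            * q ^ j
            * (\<Prod>l\<in>{1..r}. (ell_fac (c l * q ^ m l) q p j * ell_fac (a * q / c l) q p j)
                 / (ell_fac (c l) q p j * ell_fac (a * q powi (1 - int (m l)) / c l) q p j)))
       = (ell_fac q q p n * ell_fac (a * q) q p n) / (ell_fac (a * q / b) q p n * ell_fac (b * q) q p n)
         * (\<Prod>l\<in>{1..r}. (ell_fac (c l / b) q p (m l) * ell_fac (b * c l / a) q p (m l))
                 / (ell_fac (c l) q p (m l) * ell_fac (c l / a) q p (m l)))"
proof -
  interpret ptheta p using hp by unfold_locales
  define F where "F = at (0::complex)"
  define A where "A = (\<lambda>t::complex. a * (1 + t))"
  define B where "B = (\<lambda>t::complex. b / (1 + t))"
  have Fnt: "F \<noteq> bot" unfolding F_def by simp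
  have ev1: "eventually (\<lambda>t. t \<noteq> 0 \<and> norm t < 1) F"
    unfolding F_def eventually_at by (intro exI[of _ 1]) (auto simp: dist_norm)
  have t1: "1 + t \<noteq> 0" if "norm t < 1" for t :: complex
  proof
    assume "1 + t = 0"
    then have "t = -1" by (simp add: eq_neg_iff_add_eq_0 add.commute)
    then show False using that by simp
  qed
  have At: "(A \<longlongrightarrow> a) F" unfolding A_def F_def by (auto intro!: tendsto_eq_intros)
  have Bt: "(B \<longlongrightarrow> b) F" unfolding B_def F_def by (auto intro!: tendsto_eq_intros)
  have mn: "m l \<le> n" if "l \<in> {1..r}" for l
    unfolding hn using that by (intro member_le_sum) auto
  have EH1: "eventually (\<lambda>t. \<forall>s\<in>{..2 * n}. theta (A t * q ^ s) p \<noteq> 0) F"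
  proof (intro eventually_ball_finite ballI)
    fix s
    show "eventually (\<lambda>t. theta (A t * q ^ s) p \<noteq> 0) F"
    proof (rule ev_theta_nz)
      show "((\<lambda>t. A t * q ^ s) \<longlongrightarrow> a * q ^ s) F" by (intro tendsto_intros At)
      show "a * q ^ s \<noteq> 0" using hnz by simp
      show "eventually (\<lambda>t. A t * q ^ s \<noteq> a * q ^ s) F" using ev1
        by eventually_elim (use hnz in \<open>auto simp: A_def algebra_simps\<close>)
    qed
  qed simp
  have EH3: "eventually (\<lambda>t. \<forall>j\<in>{..n}. theta (B t * q ^ j) p \<noteq> 0 \<and> theta (A t * q ^ j / B t) p \<noteq> 0) F"
  proof (intro eventually_ball_finite ballI)
    fix j
    have e1: "eventually (\<lambda>t. theta (B t * q ^ j) p \<noteq> 0) F"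
    proof (rule ev_theta_nz)
      show "((\<lambda>t. B t * q ^ j) \<longlongrightarrow> b * q ^ j) F" by (intro tendsto_intros Bt)
      show "b * q ^ j \<noteq> 0" using hnz by simp
      show "eventually (\<lambda>t. B t * q ^ j \<noteq> b * q ^ j) F" using ev1
      proof eventually_elim
        case (elim t)
        then have "1 + t \<noteq> 0" using t1 by blast
        then show ?case using elim hnz by (auto simp: B_def field_simps)
      qed
    qed
    have e2: "eventually (\<lambda>t. theta (A t * q ^ j / B t) p \<noteq> 0) F"
    proof (rule ev_theta_nz)
      show "((\<lambda>t. A t * q ^ j / B t) \<longlongrightarrow> a * q ^ j / b) F" by (intro tendsto_intros At Bt) (use hnz in auto)
      show "a * q ^ j / b \<noteq> 0" using hnz by simp
      show "eventually (\<lambda>t. A t * q ^ j / B t \<noteq> a * q ^ j / b) F" using ev1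
      proof eventually_elim
        case (elim t)
        then have t0: "1 + t \<noteq> 0" using t1 by blast
        have "(1 + t) * (1 + t) \<noteq> 1"
        proof
          assume "(1 + t) * (1 + t) = 1"
          then have "t * (t + 2) = 0" by (simp add: algebra_simps)
          then have "t + 2 = 0" using elim by simp
          then have "t = -2" by (simp add: eq_neg_iff_add_eq_0)
          then show False using elim by simp
        qed
        moreover have "A t * q ^ j / B t = (a * q ^ j / b) * ((1 + t) * (1 + t))"
          using t0 hnz by (simp add: A_def B_def field_simps)
        ultimately show ?case using hnz by simp
      qed
    qed
    show "eventually (\<lambda>t. theta (B t * q ^ j) p \<noteq> 0 \<and> theta (A t * q ^ j / B t) p \<noteq> 0) F"
      using e1 e2 by eventually_elim auto
  qed simp
  have EH4: "eventually (\<lambda>t. \<forall>l\<in>{1..r}. ell_fac (A t * q powi (1 - int (m l)) / c l) q p (m l) \<noteq> 0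
                  \<and> ell_fac (c l / A t) q p (m l) \<noteq> 0) F"
  proof (intro eventually_ball_finite ballI)
    fix l assume l: "l \<in> {1..r}"
    have n1: "ell_fac (a * q powi (1 - int (m l)) / c l) q p (m l) \<noteq> 0" using den3[OF mn[OF l] l] by simp
    have n2: "ell_fac (c l / a) q p (m l) \<noteq> 0" using den5[OF l] by simp
    have l1: "((\<lambda>t. ell_fac (A t * q powi (1 - int (m l)) / c l) q p (m l)) \<longlongrightarrow> ell_fac (a * q powi (1 - int (m l)) / c l) q p (m l)) F"
      by (intro tendsto_ef tendsto_intros At) (use hnz l in auto)
    have l2: "((\<lambda>t. ell_fac (c l / A t) q p (m l)) \<longlongrightarrow> ell_fac (c l / a) q p (m l)) F"
      by (intro tendsto_ef tendsto_intros At) (use hnz l in auto)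
    show "eventually (\<lambda>t. ell_fac (A t * q powi (1 - int (m l)) / c l) q p (m l) \<noteq> 0
                  \<and> ell_fac (c l / A t) q p (m l) \<noteq> 0) F"
      using tendsto_imp_eventually_ne[OF l1 n1] tendsto_imp_eventually_ne[OF l2 n2] by eventually_elim auto
  qed simp
  have EH5: "eventually (\<lambda>t. \<forall>j\<in>{..n}. \<forall>l\<in>{1..r}. ell_fac (A t * q powi (1 - int (m l)) / c l) q p j \<noteq> 0) F"
  proof (intro eventually_ball_finite ballI)
    fix j l assume j: "j \<in> {..n}" and l: "l \<in> {1..r}"
    have n1: "ell_fac (a * q powi (1 - int (m l)) / c l) q p j \<noteq> 0" using den3[of j l] j l by simp
    have l1: "((\<lambda>t. ell_fac (A t * q powi (1 - int (m l)) / c l) q p j) \<longlongrightarrow> ell_fac (a * q powi (1 - int (m l)) / c l) q p j) F"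
      by (intro tendsto_ef tendsto_intros At) (use hnz l in auto)
    show "eventually (\<lambda>t. ell_fac (A t * q powi (1 - int (m l)) / c l) q p j \<noteq> 0) F"
      using tendsto_imp_eventually_ne[OF l1 n1] .
  qed simp_all
  have H2: "theta (q ^ d) p \<noteq> 0" if "1 \<le> d" "d \<le> n" for d
  proof -
    have "ell_fac q q p n \<noteq> 0" using den2[of n] by simp
    then have "theta (q * q ^ (d - 1)) p \<noteq> 0" using that by (auto simp: ef_zero_iff)
    moreover have "q * q ^ (d - 1) = q ^ d" using that by (simp add: power_eq_if)
    ultimately show ?thesis by simp
  qed
  have evG: "eventually (\<lambda>t. gset p q (A t) (B t) r n c m) F"
    using ev1 EH1 EH3 EH4 EH5
  proof eventually_elim
    case (elim t)
    then have t0: "1 + t \<noteq> 0" using t1 by blast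
    show ?case
    proof (unfold_locales)
      show "A t \<noteq> 0" "B t \<noteq> 0" using t0 hnz by (auto simp: A_def B_def)
      show "q \<noteq> 0" by (rule hnz)
      show "\<And>l. l \<in> {1..r} \<Longrightarrow> c l \<noteq> 0" by (rule hnz)
      show "n = (\<Sum>l\<in>{1..r}. m l)" by (rule hn)
      show "\<And>s. s \<le> 2 * n \<Longrightarrow> theta (A t * q ^ s) p \<noteq> 0" using elim by auto
      show "\<And>d. 1 \<le> d \<Longrightarrow> d \<le> n \<Longrightarrow> theta (q ^ d) p \<noteq> 0" by (rule H2)
      show "\<And>j. j \<le> n \<Longrightarrow> theta (B t * q ^ j) p \<noteq> 0 \<and> theta (A t * q ^ j / B t) p \<noteq> 0" using elim by auto
      show "\<And>l. l \<in> {1..r} \<Longrightarrow> ell_fac (c l) q p (m l) \<noteq> 0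
        \<and> ell_fac (A t * q powi (1 - int (m l)) / c l) q p (m l) \<noteq> 0 \<and> ell_fac (c l / A t) q p (m l) \<noteq> 0"
        using elim den5 by auto
      show "\<And>j l. j \<le> n \<Longrightarrow> l \<in> {1..r} \<Longrightarrow> ell_fac (c l) q p j \<noteq> 0
        \<and> ell_fac (A t * q powi (1 - int (m l)) / c l) q p j \<noteq> 0"
        using elim den3 by auto
    qed
  qed
  have evEq: "eventually (\<lambda>t. Lf p q r n c m (A t) (B t) = Rf p q r n c m (A t) (B t)) F"
    using evG
  proof eventually_elim
    case (elim t)
    show ?case using gset.gen_main[OF elim]
      unfolding gset.summand_def[OF elim] gset.RHSv_def[OF elim] Lf_def Rf_def .
  qed
  have L1: "((\<lambda>t. Lf p q r n c m (A t) (B t)) \<longlongrightarrow> Lf p q r n c m a b) F"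
    by (rule Lf_tendsto[OF At Bt hnz den1 den2 den3]) auto
  have R1: "((\<lambda>t. Rf p q r n c m (A t) (B t)) \<longlongrightarrow> Rf p q r n c m a b) F"
    by (rule Rf_tendsto[OF At Bt hnz den4 den5]) auto
  have R2: "((\<lambda>t. Lf p q r n c m (A t) (B t)) \<longlongrightarrow> Rf p q r n c m a b) F"
    by (rule Lim_transform_eventually[OF R1]) (use evEq in \<open>eventually_elim, simp\<close>)
  have "Lf p q r n c m a b = Rf p q r n c m a b" using tendsto_unique[OF Fnt L1 R2] .
  then show ?thesis unfolding Lf_def Rf_def .
qed


end
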